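(* Let $n\ge2$, $1<\mathscr{P}\le n-1$, $N=\binom{n}{\mathscr{P}}$, let $0\le l<k\le N$ be integers and $p,q$ constants with $p=q-l$. Let $\varphi\in C^0(\mathbb{S}^n)$ be positive. Suppose that for $i=1,2$, $u_i$ is a positive admissible solution of $$\frac{\sigma_k(\Lambda(\nabla^2u_i+u_iI))}{\sigma_l(\Lambda(\nabla^2u_i+u_iI))}=u_i^{p-1}(u_i^2+|\nabla u_i|^2)^{\frac{k+1-q}{2}}\gamma_i\varphi\quad\text{on }\mathbb{S}^n,$$ where $\gamma_1,\gamma_2$ are constants. Then $\gamma_1=\gamma_2$.
   Context: $\mathbb{S}^n$ is the unit sphere with its standard metric; $\nabla u$, $\nabla^2u$ are the gradient and covariant Hessian in a local orthonormal frame; $I$ is the identity. Let $\mathbf{I}_1,\dots,\mathbf{I}_N$ enumerate the multi-indices $1\le i_1<\dots<i_{\mathscr{P}}\le n$. For a symmetric matrix $A$ with eigenvalues $\lambda$, $\Lambda(A)=(\Lambda_{\mathbf{I}_1},\dots,\Lambda_{\mathbf{I}_N})$ with $\Lambda_{\mathbf{I}}=\lambda_{i_1}+\dots+\lambda_{i_{\mathscr{P}}}$. $\sigma_m$ is the $m$-th elementary symmetric polynomial, $\sigma_0=1$; $\Gamma_k=\{\mu\in\mathbb{R}^N:\sigma_j(\mu)>0,\ 1\le j\le k\}$. A function $u\in C^2(\mathbb{S}^n)$ is admissible if $\Lambda(\nabla^2u+uI)\in\Gamma_k$ at every point. *)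

theory Defs
  imports "HOL-Analysis.Analysis"
begin

definition C2_on :: "'a::euclidean_space set \<Rightarrow> ('a \<Rightarrow> real) \<Rightarrow> bool" where
  "C2_on S f \<longleftrightarrow> open S \<and>
     (\<exists>f' :: 'a \<Rightarrow> ('a \<Rightarrow>\<^sub>L real). \<exists>f'' :: 'a \<Rightarrow> ('a \<Rightarrow>\<^sub>L ('a \<Rightarrow>\<^sub>L real)).
        (\<forall>x\<in>S. (f has_derivative blinfun_apply (f' x)) (at x)) \<and>
        (\<forall>x\<in>S. (f' has_derivative blinfun_apply (f'' x)) (at x)) \<and>
        continuous_on S f'')"

definition C2_sphere :: "('a::euclidean_space \<Rightarrow> real) \<Rightarrow> bool" where
  "C2_sphere u \<longleftrightarrow> (\<exists>S. open S \<and> sphere 0 1 \<subseteq> S \<and> C2_on S u)"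

definition sphere_exp :: "'a::euclidean_space \<Rightarrow> 'a \<Rightarrow> 'a" where
  "sphere_exp x v = cos (norm v) *\<^sub>R x + (sin (norm v) / norm v) *\<^sub>R v"

text \<open>Covariant derivative du(v) and covariant Hessian quadratic form (nabla^2 u)(v,v)
  at x, computed along the geodesic t \<mapsto> exp_x(t v).\<close>
definition sph_grad :: "('a::euclidean_space \<Rightarrow> real) \<Rightarrow> 'a \<Rightarrow> 'a \<Rightarrow> real" where
  "sph_grad u x v = deriv (\<lambda>t. u (sphere_exp x (t *\<^sub>R v))) 0"

definition sph_hess :: "('a::euclidean_space \<Rightarrow> real) \<Rightarrow> 'a \<Rightarrow> 'a \<Rightarrow> real" where
  "sph_hess u x v = deriv (deriv (\<lambda>t. u (sphere_exp x (t *\<^sub>R v)))) 0"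

text \<open>e_0..e_{n-1} orthonormal and orthogonal to x (an orthonormal frame of T_x S^n when DIM = n+1).\<close>
definition tframe :: "nat \<Rightarrow> 'a::euclidean_space \<Rightarrow> (nat \<Rightarrow> 'a) \<Rightarrow> bool" where
  "tframe n x e \<longleftrightarrow> (\<forall>i<n. \<forall>j<n. e i \<bullet> e j = (if i = j then 1 else 0)) \<and> (\<forall>i<n. e i \<bullet> x = 0)"

text \<open>e is an orthonormal frame at x diagonalising nabla^2 u + u I, with eigenvalues lam.\<close>
definition eig_frame :: "nat \<Rightarrow> ('a::euclidean_space \<Rightarrow> real) \<Rightarrow> 'a \<Rightarrow> (nat \<Rightarrow> 'a) \<Rightarrow> (nat \<Rightarrow> real) \<Rightarrow> bool" where
  "eig_frame n u x e lam \<longleftrightarrow> tframe n x e \<and>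
     (\<forall>c :: nat \<Rightarrow> real. sph_hess u x (\<Sum>i<n. c i *\<^sub>R e i) + u x * (\<Sum>i<n. (c i)\<^sup>2)
                          = (\<Sum>i<n. lam i * (c i)\<^sup>2))"

definition Idx :: "nat \<Rightarrow> nat \<Rightarrow> nat set set" where
  "Idx n P = {I. I \<subseteq> {..<n} \<and> card I = P}"

definition Lam :: "(nat \<Rightarrow> real) \<Rightarrow> nat set \<Rightarrow> real" where
  "Lam lam I = (\<Sum>i\<in>I. lam i)"

definition esym :: "nat \<Rightarrow> 'b set \<Rightarrow> ('b \<Rightarrow> real) \<Rightarrow> real" where
  "esym m A mu = (\<Sum>J\<in>{J. J \<subseteq> A \<and> card J = m}. \<Prod>j\<in>J. mu j)"

definition in_Gamma :: "nat \<Rightarrow> 'b set \<Rightarrow> ('b \<Rightarrow> real) \<Rightarrow> bool" where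
  "in_Gamma k A mu \<longleftrightarrow> (\<forall>j. 1 \<le> j \<and> j \<le> k \<longrightarrow> esym j A mu > 0)"

definition admissible :: "nat \<Rightarrow> nat \<Rightarrow> nat \<Rightarrow> ('a::euclidean_space \<Rightarrow> real) \<Rightarrow> bool" where
  "admissible n P k u \<longleftrightarrow> C2_sphere u \<and>
     (\<forall>x\<in>sphere 0 1. \<forall>e lam. eig_frame n u x e lam \<longrightarrow> in_Gamma k (Idx n P) (Lam lam))"

definition solves :: "nat \<Rightarrow> nat \<Rightarrow> nat \<Rightarrow> nat \<Rightarrow> real \<Rightarrow> real \<Rightarrow> real \<Rightarrow> ('a::euclidean_space \<Rightarrow> real)
                      \<Rightarrow> ('a \<Rightarrow> real) \<Rightarrow> bool" where
  "solves n P k l p q \<gamma> \<phi> u \<longleftrightarrow>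
     (\<forall>x\<in>sphere 0 1. \<forall>e lam. eig_frame n u x e lam \<longrightarrow>
        esym k (Idx n P) (Lam lam) / esym l (Idx n P) (Lam lam)
        = u x powr (p - 1) * ((u x)\<^sup>2 + (\<Sum>i<n. (sph_grad u x (e i))\<^sup>2)) powr ((real k + 1 - q) / 2)
          * \<gamma> * \<phi> x)"

end

theory Submission
  imports Defs "HOL-Computational_Algebra.Polynomial"
begin

lemma esym_0: "finite A \<Longrightarrow> esym 0 A x = 1"
proof -
  assume "finite A"
  then have "{J. J \<subseteq> A \<and> card J = 0} = {{}}"
    by (auto simp: card_eq_0_iff dest: finite_subset)
  then show ?thesis by (simp add: esym_def)
qed

lemma esym_insert:
  assumes "finite A" "a \<notin> A"
  shows "esym (Suc m) (insert a A) x = x a * esym m A x + esym (Suc m) A x"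
proof -
  have fin: "finite {J. J \<subseteq> insert a A}" using assms by simp
  have split: "{J. J \<subseteq> insert a A \<and> card J = Suc m} =
     {J. J \<subseteq> A \<and> card J = Suc m} \<union> insert a ` {J. J \<subseteq> A \<and> card J = m}"
  proof (rule set_eqI, rule iffI)
    fix J assume J: "J \<in> {J. J \<subseteq> insert a A \<and> card J = Suc m}"
    show "J \<in> {J. J \<subseteq> A \<and> card J = Suc m} \<union> insert a ` {J. J \<subseteq> A \<and> card J = m}"
    proof (cases "a \<in> J")
      case True
      have "finite J" using J assms by (auto intro: finite_subset)
      then have "card (J - {a}) = m" using J True by auto
      moreover have "J - {a} \<subseteq> A" using J by auto
      moreover have "J = insert a (J - {a})" using True by auto
      ultimately show ?thesis by blast
    next
      case False
      then show ?thesis using J by auto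
    qed
  next
    fix J assume J: "J \<in> {J. J \<subseteq> A \<and> card J = Suc m} \<union> insert a ` {J. J \<subseteq> A \<and> card J = m}"
    then show "J \<in> {J. J \<subseteq> insert a A \<and> card J = Suc m}"
    proof
      assume "J \<in> {J. J \<subseteq> A \<and> card J = Suc m}" then show ?thesis by auto
    next
      assume "J \<in> insert a ` {J. J \<subseteq> A \<and> card J = m}"
      then obtain K where K: "K \<subseteq> A" "card K = m" "J = insert a K" by auto
      have "finite K" using K assms by (auto intro: finite_subset)
      moreover have "a \<notin> K" using K assms by auto
      ultimately show ?thesis using K assms by auto
    qed
  qed
  have disj: "{J. J \<subseteq> A \<and> card J = Suc m} \<inter> insert a ` {J. J \<subseteq> A \<and> card J = m} = {}"
    using assms by auto
  have inj: "inj_on (insert a) {J. J \<subseteq> A \<and> card J = m}"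
    using assms by (auto simp: inj_on_def)
  have f1: "finite {J. J \<subseteq> A \<and> card J = Suc m}" using assms by simp
  have f2: "finite (insert a ` {J. J \<subseteq> A \<and> card J = m})" using assms by simp
  have "esym (Suc m) (insert a A) x =
      (\<Sum>J\<in>{J. J \<subseteq> A \<and> card J = Suc m}. \<Prod>j\<in>J. x j) +
      (\<Sum>J\<in>insert a ` {J. J \<subseteq> A \<and> card J = m}. \<Prod>j\<in>J. x j)"
    unfolding esym_def split by (rule sum.union_disjoint[OF f1 f2 disj])
  also have "(\<Sum>J\<in>insert a ` {J. J \<subseteq> A \<and> card J = m}. \<Prod>j\<in>J. x j)
      = (\<Sum>J\<in>{J. J \<subseteq> A \<and> card J = m}. \<Prod>j\<in>insert a J. x j)"
    by (rule sum.reindex[OF inj, unfolded comp_def])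
  also have "\<dots> = (\<Sum>J\<in>{J. J \<subseteq> A \<and> card J = m}. x a * (\<Prod>j\<in>J. x j))"
  proof (rule sum.cong[OF refl])
    fix J assume "J \<in> {J. J \<subseteq> A \<and> card J = m}"
    then have "finite J" "a \<notin> J" using assms by (auto intro: finite_subset)
    then show "(\<Prod>j\<in>insert a J. x j) = x a * (\<Prod>j\<in>J. x j)" by simp
  qed
  also have "\<dots> = x a * esym m A x" by (simp add: esym_def sum_distrib_left)
  finally show ?thesis by (simp add: esym_def)
qed

lemma esym_remove:
  assumes "finite A" "j \<in> A"
  shows "esym (Suc m) A x = x j * esym m (A - {j}) x + esym (Suc m) (A - {j}) x"
proof -
  have "A = insert j (A - {j})" using assms by auto
  then have "esym (Suc m) A x = esym (Suc m) (insert j (A - {j})) x" by simp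
  also have "\<dots> = x j * esym m (A - {j}) x + esym (Suc m) (A - {j}) x"
    using assms by (intro esym_insert) auto
  finally show ?thesis .
qed

lemma esym_gt_card: "finite A \<Longrightarrow> card A < m \<Longrightarrow> esym m A x = 0"
proof -
  assume "finite A" "card A < m"
  then have "\<forall>J. J \<subseteq> A \<longrightarrow> card J \<le> card A" using card_mono by blast
  then have E: "{J. J \<subseteq> A \<and> card J = m} = {}"
    using \<open>card A < m\<close> by (auto simp: not_le[symmetric])
  show ?thesis unfolding esym_def E by simp
qed

lemma esym_card: "finite A \<Longrightarrow> esym (card A) A x = (\<Prod>a\<in>A. x a)"
proof -
  assume f: "finite A"
  then have "{J. J \<subseteq> A \<and> card J = card A} = {A}"
    using card_subset_eq by auto
  then show ?thesis by (simp add: esym_def)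
qed

lemma esym_scale: "finite A \<Longrightarrow> esym m A (\<lambda>a. c * x a) = c ^ m * esym m A x"
proof -
  assume f: "finite A"
  have "(\<Prod>j\<in>J. c * x j) = c ^ m * (\<Prod>j\<in>J. x j)" if "J \<subseteq> A" "card J = m" for J
    using that by (simp add: prod.distrib)
  then show ?thesis by (simp add: esym_def sum_distrib_left)
qed

lemma esym_cong: "(\<And>a. a \<in> A \<Longrightarrow> x a = y a) \<Longrightarrow> esym m A x = esym m A y"
  unfolding esym_def by (intro sum.cong refl prod.cong) auto

lemma esym_1: "finite A \<Longrightarrow> esym 1 A x = (\<Sum>a\<in>A. x a)"
proof (induction A rule: finite_induct)
  case empty then show ?case by (simp add: esym_def)
next
  case (insert a A)
  then show ?case using esym_insert[OF insert(1,2), of 0 x] esym_0[OF insert(1)] by simp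
qed

lemma coeff_prod_linear:
  fixes x :: "'b \<Rightarrow> real"
  assumes "finite A"
  shows "coeff (\<Prod>a\<in>A. [:x a, 1:]) j = (if j \<le> card A then esym (card A - j) A x else 0)"
  using assms
proof (induction A arbitrary: j rule: finite_induct)
  case empty
  then show ?case by (simp add: esym_0)
next
  case (insert a A)
  let ?q = "\<Prod>a\<in>A. [:x a, 1:]"
  have P: "(\<Prod>a\<in>insert a A. [:x a, 1:]) = smult (x a) ?q + pCons 0 ?q"
    using insert by simp
  have c: "coeff (\<Prod>a\<in>insert a A. [:x a, 1:]) j =
      x a * coeff ?q j + (if j = 0 then 0 else coeff ?q (j - 1))"
    unfolding P by (simp add: coeff_pCons split: nat.split)
  have cA: "card (insert a A) = Suc (card A)" using insert by simp
  show ?case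
  proof (cases j)
    case 0
    then show ?thesis using c cA insert esym_insert[OF insert(1,2), of "card A" x]
      esym_gt_card[OF insert(1), of "Suc (card A)" x] by simp
  next
    case (Suc i)
    show ?thesis
    proof (cases "i < card A")
      case True
      have e: "card A - i = Suc (card A - Suc i)" using True by simp
      show ?thesis using c cA Suc True insert esym_insert[OF insert(1,2), of "card A - Suc i" x]
        by (simp add: e)
    next
      case False
      show ?thesis
      proof (cases "i = card A")
        case True
        have "finite (insert a A)" using insert by simp
        then show ?thesis using c cA Suc insert esym_0[OF insert(1)] esym_0[of "insert a A" x] True by simp
      next
        case False
        then show ?thesis using c cA Suc insert \<open>\<not> i < card A\<close> by simp
      qed
    qed
  qed
qed

lemma pderiv_iter_coeff:
  fixes p :: "real poly"
  shows "coeff ((pderiv ^^ r) p) i = coeff p (i + r) * (fact (i + r) / fact i)"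
proof (induction r arbitrary: i)
  case 0 then show ?case by simp
next
  case (Suc r)
  have "coeff ((pderiv ^^ Suc r) p) i = of_nat (Suc i) * coeff ((pderiv ^^ r) p) (Suc i)"
    by (simp add: coeff_pderiv)
  also have "\<dots> = of_nat (Suc i) * (coeff p (Suc i + r) * (fact (Suc i + r) / fact (Suc i)))"
    using Suc by simp
  also have "\<dots> = coeff p (i + Suc r) * (fact (i + Suc r) / fact i)"
  proof -
    have "of_nat (Suc i) * (X / fact (Suc i)) = X / (fact i::real)" for X
      unfolding fact_Suc[of i] by (simp add: field_simps del: of_nat_Suc)
    then show ?thesis by (simp add: ac_simps)
  qed
  finally show ?case .
qed

lemma pderiv_iter_degree:
  fixes p :: "real poly"
  shows "degree ((pderiv ^^ r) p) = degree p - r"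
  by (induction r) (simp_all add: degree_pderiv)

lemma roots_split:
  fixes p :: "real poly"
  assumes "p \<noteq> 0" "finite R" "card R = degree p" "\<forall>r\<in>R. poly p r = 0"
  shows "p = smult (lead_coeff p) (\<Prod>r\<in>R. [:-r, 1:])"
proof -
  have dvd: "(\<Prod>r\<in>R. [:-r, 1:]) dvd p"
    using assms(2,4)
  proof (induction R rule: finite_induct)
    case empty then show ?case by simp
  next
    case (insert a R)
    then obtain q where q: "p = (\<Prod>r\<in>R. [:-r, 1:]) * q" by (auto elim: dvdE)
    have "poly (\<Prod>r\<in>R. [:-r, 1:]) a \<noteq> 0"
      using insert by (auto simp: poly_prod)
    moreover have "poly p a = 0" using insert by simp
    ultimately have "poly q a = 0" using q by simp
    then obtain q' where q': "q = [:-a, 1:] * q'" by (auto simp: poly_eq_0_iff_dvd elim: dvdE)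
    have e2: "(\<Prod>r\<in>insert a R. [:-r, 1:]) = [:-a, 1:] * (\<Prod>r\<in>R. [:-r, 1:])"
      using insert by simp
    have "p = (\<Prod>r\<in>insert a R. [:-r, 1:]) * q'" unfolding q q' e2 by (simp only: mult_ac)
    then show ?case by simp
  qed
  then obtain q where q: "p = (\<Prod>r\<in>R. [:-r, 1:]) * q" by (auto elim: dvdE)
  have nz: "(\<Prod>r\<in>R. [:-r, 1:]) \<noteq> (0::real poly)" by (simp add: prod_zero_iff assms(2))
  have qnz: "q \<noteq> 0" using q assms(1) by auto
  have dP: "degree (\<Prod>r\<in>R. [:-r, 1:]) = card R"
    by (subst degree_prod_eq_sum_degree) auto
  have "degree p = card R + degree q" using q nz qnz by (simp add: degree_mult_eq dP)
  then have "degree q = 0" using assms(3) by simp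
  then obtain c where c: "q = [:c:]" by (meson degree_eq_zeroE)
  have lP: "lead_coeff (\<Prod>r\<in>R. [:-r, 1:]) = (1::real)" by (simp add: lead_coeff_prod)
  have "lead_coeff p = lead_coeff (\<Prod>r\<in>R. [:-r, 1:]) * lead_coeff q"
    using q by (simp only: lead_coeff_mult)
  then have l: "lead_coeff p = c" using lP c by simp
  have ps: "p = smult c (\<Prod>r\<in>R. [:-r, 1:])" using q c by simp
  show ?thesis by (subst l) (rule ps)
qed

lemma rolle_roots:
  fixes p :: "real poly"
  assumes "finite R" "card R = Suc d" "\<forall>r\<in>R. poly p r = 0"
  shows "\<exists>R'. finite R' \<and> card R' = d \<and> (\<forall>y\<in>R'. poly (pderiv p) y = 0)"
proof -
  define xs where "xs = sorted_list_of_set R"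
  have len: "length xs = Suc d" using assms by (simp add: xs_def length_sorted_list_of_set)
  have st: "sorted_wrt (<) xs" unfolding xs_def by (rule strict_sorted_list_of_set)
  have lt: "\<And>i j. i < j \<Longrightarrow> j < Suc d \<Longrightarrow> xs ! i < xs ! j"
    using st len by (auto simp: sorted_wrt_iff_nth_less)
  have inR: "\<And>i. i < Suc d \<Longrightarrow> xs ! i \<in> R"
    using len assms(1) by (metis nth_mem set_sorted_list_of_set xs_def)
  have "\<forall>i\<in>{..<d}. \<exists>z. xs ! i < z \<and> z < xs ! Suc i \<and> poly (pderiv p) z = 0"
  proof
    fix i assume i: "i \<in> {..<d}"
    then have i: "i < d" by simp
    have a: "xs ! i < xs ! Suc i" using lt i by simp
    have "poly p (xs ! i) = poly p (xs ! Suc i)" using assms(3) inR i by simp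
    note eq = this
    have cont: "continuous_on {xs ! i..xs ! Suc i} (poly p)"
      by (intro continuous_on_poly continuous_on_id)
    have der: "\<And>x. (poly p has_derivative (\<lambda>v. poly (pderiv p) x * v)) (at x)"
      using poly_DERIV[unfolded has_field_derivative_def] by (metis mult.commute)
    obtain z where "xs ! i < z" "z < xs ! Suc i" "(\<lambda>v. poly (pderiv p) z * v) = (\<lambda>v. 0)"
      using Rolle_deriv[OF a eq cont der] by blast
    then show "\<exists>z. xs ! i < z \<and> z < xs ! Suc i \<and> poly (pderiv p) z = 0"
      by (metis mult_1_right)
  qed
  from bchoice[OF this] obtain z where z0: "\<forall>i\<in>{..<d}. xs ! i < z i \<and> z i < xs ! Suc i \<and> poly (pderiv p) (z i) = 0"
    by blast
  then have z: "\<And>i. i < d \<Longrightarrow> xs ! i < z i \<and> z i < xs ! Suc i \<and> poly (pderiv p) (z i) = 0"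
    by simp
  have inj: "inj_on z {..<d}"
  proof (rule inj_onI)
    fix i j assume ij: "i \<in> {..<d}" "j \<in> {..<d}" "z i = z j"
    show "i = j"
    proof (rule ccontr)
      assume "i \<noteq> j"
      then consider "i < j" | "j < i" by linarith
      then show False
      proof cases
        case 1
        have "z i < xs ! Suc i" using z[of i] ij(1) by simp
        also have "xs ! Suc i \<le> xs ! j"
          using lt[of "Suc i" j] 1 ij by (cases "Suc i = j") auto
        also have "xs ! j < z j" using z[of j] ij(2) by simp
        finally show False using ij by simp
      next
        case 2
        have "z j < xs ! Suc j" using z[of j] ij(2) by simp
        also have "xs ! Suc j \<le> xs ! i"
          using lt[of "Suc j" i] 2 ij by (cases "Suc j = i") auto
        also have "xs ! i < z i" using z[of i] ij(1) by simp
        finally show False using ij by simp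
      qed
    qed
  qed
  show ?thesis
    by (rule exI[of _ "z ` {..<d}"]) (use inj z in \<open>auto simp: card_image\<close>)
qed

lemma iter_roots:
  fixes p :: "real poly"
  assumes "finite R" "card R = d" "\<forall>r\<in>R. poly p r = 0" "r \<le> d"
  shows "\<exists>R'. finite R' \<and> card R' = d - r \<and> (\<forall>y\<in>R'. poly ((pderiv ^^ r) p) y = 0)"
  using assms(4)
proof (induction r)
  case 0 then show ?case using assms by auto
next
  case (Suc r)
  then obtain R' where R': "finite R'" "card R' = d - r" "\<forall>y\<in>R'. poly ((pderiv ^^ r) p) y = 0"
    by auto
  have "card R' = Suc (d - Suc r)" using R' Suc by simp
  from rolle_roots[OF R'(1) this R'(3)] show ?case by simp
qed

lemma esym_compl:
  fixes z :: "'b \<Rightarrow> real"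
  assumes "finite Y" "\<forall>y\<in>Y. z y \<noteq> 0" "j \<le> card Y"
  shows "esym (card Y - j) Y z = (\<Prod>y\<in>Y. z y) * esym j Y (\<lambda>y. 1 / z y)"
proof -
  let ?S = "{J. J \<subseteq> Y \<and> card J = card Y - j}"
  let ?T = "{J. J \<subseteq> Y \<and> card J = j}"
  have "esym (card Y - j) Y z = (\<Sum>J\<in>?T. \<Prod>y\<in>Y - J. z y)"
    unfolding esym_def
  proof (rule sum.reindex_bij_witness[where i="\<lambda>J. Y - J" and j="\<lambda>J. Y - J"])
    fix a assume "a \<in> ?S" then show "Y - (Y - a) = a" by auto
  next
    fix a assume a: "a \<in> ?S"
    then have "finite a" using assms(1) finite_subset by blast
    then show "Y - a \<in> ?T" using a assms by (auto simp: card_Diff_subset)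
  next
    fix b assume "b \<in> ?T" then show "Y - (Y - b) = b" by auto
  next
    fix b assume b: "b \<in> ?T"
    then have "finite b" using assms(1) finite_subset by blast
    then show "Y - b \<in> ?S" using b assms by (auto simp: card_Diff_subset)
  next
    fix a assume "a \<in> ?S" then show "(\<Prod>y\<in>Y - (Y - a). z y) = (\<Prod>y\<in>a. z y)"
      by (simp add: Int_absorb1 Diff_Diff_Int)
  qed
  also have "\<dots> = (\<Sum>J\<in>?T. (\<Prod>y\<in>Y. z y) * (\<Prod>y\<in>J. 1 / z y))"
  proof (rule sum.cong[OF refl])
    fix J assume J: "J \<in> ?T"
    have fJ: "finite J" using J assms(1) finite_subset by blast
    have "(\<Prod>y\<in>Y. z y) = (\<Prod>y\<in>Y - J. z y) * (\<Prod>y\<in>J. z y)"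
      using J assms(1) by (simp add: prod.subset_diff)
    moreover have "(\<Prod>y\<in>J. z y) * (\<Prod>y\<in>J. 1 / z y) = 1"
    proof -
      have "(\<Prod>y\<in>J. z y) * (\<Prod>y\<in>J. 1 / z y) = (\<Prod>y\<in>J. z y * (1 / z y))"
        by (rule prod.distrib[symmetric])
      also have "\<dots> = 1" using J assms(2) by (intro prod.neutral) auto
      finally show ?thesis .
    qed
    ultimately show "(\<Prod>y\<in>Y - J. z y) = (\<Prod>y\<in>Y. z y) * (\<Prod>y\<in>J. 1 / z y)"
      by (metis mult.assoc mult_1_right)
  qed
  also have "\<dots> = (\<Prod>y\<in>Y. z y) * esym j Y (\<lambda>y. 1 / z y)"
    by (simp add: esym_def sum_distrib_left)
  finally show ?thesis .
qed

lemma sq_sum_esym: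
  fixes w :: "'b \<Rightarrow> real"
  assumes "finite Y"
  shows "(\<Sum>y\<in>Y. w y)\<^sup>2 = (\<Sum>y\<in>Y. (w y)\<^sup>2) + 2 * esym 2 Y w"
  using assms
proof (induction Y rule: finite_induct)
  case empty then show ?case by (simp add: esym_gt_card)
next
  case (insert a Y)
  have e: "esym 2 (insert a Y) w = w a * (\<Sum>y\<in>Y. w y) + esym 2 Y w"
    using esym_insert[OF insert(1,2), of 1 w] esym_1[OF insert(1), of w]
    by (simp add: numeral_2_eq_2)
  show ?case using insert e by (simp add: power2_eq_square algebra_simps)
qed

lemma newton_top:
  fixes z :: "'b \<Rightarrow> real"
  assumes "finite Y" "card Y = K" "2 \<le> K"
  shows "2 * real K * esym (K - 2) Y z * esym K Y z \<le> (real K - 1) * (esym (K - 1) Y z)\<^sup>2"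
proof (cases "\<exists>y\<in>Y. z y = 0")
  case True
  have "esym K Y z = 0" using esym_card[OF assms(1), of z] assms True by (simp add: prod_zero_iff)
  moreover have "0 \<le> (real K - 1) * (esym (K - 1) Y z)\<^sup>2" using assms by simp
  ultimately show ?thesis by simp
next
  case False
  then have nz: "\<forall>y\<in>Y. z y \<noteq> 0" by auto
  define w where "w = (\<lambda>y. 1 / z y)"
  define \<pi> where "\<pi> = (\<Prod>y\<in>Y. z y)"
  define S where "S = (\<Sum>y\<in>Y. w y)"
  define T where "T = (\<Sum>y\<in>Y. (w y)\<^sup>2)"
  have eK: "esym K Y z = \<pi>"
    using esym_compl[OF assms(1) nz, of 0] assms esym_0[OF assms(1)] by (simp add: \<pi>_def)
  have eK1: "esym (K - 1) Y z = \<pi> * S"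
    using esym_compl[OF assms(1) nz, of 1] assms esym_1[OF assms(1)] by (simp add: \<pi>_def S_def w_def)
  have eK2: "esym (K - 2) Y z = \<pi> * esym 2 Y w"
    using esym_compl[OF assms(1) nz, of 2] assms by (simp add: \<pi>_def w_def)
  have sq: "S\<^sup>2 = T + 2 * esym 2 Y w" using sq_sum_esym[OF assms(1), of w] by (simp add: S_def T_def)
  have cs: "S\<^sup>2 \<le> T * real K" using sum_squared_le_sum_of_squares[of w Y] assms by (simp add: S_def T_def)
  have key: "2 * real K * esym 2 Y w \<le> (real K - 1) * S\<^sup>2"
  proof -
    have "2 * real K * esym 2 Y w = real K * (S\<^sup>2 - T)" using sq by (simp add: algebra_simps)
    also have "\<dots> \<le> (real K - 1) * S\<^sup>2" using cs by (simp add: algebra_simps)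
    finally show ?thesis .
  qed
  have "2 * real K * esym (K - 2) Y z * esym K Y z = \<pi>\<^sup>2 * (2 * real K * esym 2 Y w)"
    by (simp add: eK eK2 power2_eq_square algebra_simps)
  also have "\<dots> \<le> \<pi>\<^sup>2 * ((real K - 1) * S\<^sup>2)"
    by (rule mult_left_mono[OF key]) simp
  also have "\<dots> = (real K - 1) * (esym (K - 1) Y z)\<^sup>2"
    unfolding eK1 by (simp add: power2_eq_square algebra_simps)
  finally show ?thesis .
qed

lemma newton_distinct:
  fixes x :: "'b \<Rightarrow> real"
  assumes A: "finite A" "inj_on x A" "1 \<le> m"
  shows "esym (m - 1) A x * esym (m + 1) A x \<le> (esym m A x)\<^sup>2"
proof (cases "card A < m + 1")
  case True
  then have "esym (m + 1) A x = 0" using esym_gt_card[OF A(1)] by simp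
  then show ?thesis by simp
next
  case False
  define N where "N = card A"
  define r where "r = N - (m + 1)"
  define P where "P = (\<Prod>a\<in>A. [:x a, 1:])"
  define Q where "Q = (pderiv ^^ r) P"
  have mN: "m + 1 \<le> N" using False N_def by simp
  have cP: "\<And>j. coeff P j = (if j \<le> N then esym (N - j) A x else 0)"
    unfolding P_def N_def by (rule coeff_prod_linear[OF A(1)])
  have degP: "degree P = N"
  proof (rule antisym)
    show "degree P \<le> N" by (rule degree_le) (simp add: cP)
    show "N \<le> degree P" by (rule le_degree) (simp add: cP esym_0[OF A(1)])
  qed
  define R where "R = (\<lambda>a. - x a) ` A"
  have injm: "inj_on (\<lambda>a. - x a) A" using A(2) by (auto simp: inj_on_def)
  have fR: "finite R" and cR: "card R = N"
    using A(1) injm by (auto simp: R_def N_def card_image)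
  have rootsP: "\<forall>y\<in>R. poly P y = 0"
  proof
    fix y assume "y \<in> R"
    then obtain a where a: "a \<in> A" "y = - x a" by (auto simp: R_def)
    show "poly P y = 0" unfolding P_def poly_prod using a A(1)
      by (auto simp: prod_zero_iff intro!: bexI[of _ a])
  qed
  have rN: "r \<le> N" by (simp add: r_def)
  obtain R' where R': "finite R'" "card R' = N - r" "\<forall>y\<in>R'. poly Q y = 0"
    using iter_roots[OF fR cR rootsP rN] unfolding Q_def by blast
  have cR': "card R' = m + 1" using R'(2) mN by (simp add: r_def)
  have cQ: "\<And>i. coeff Q i = coeff P (i + r) * (fact (i + r) / fact i)"
    unfolding Q_def by (rule pderiv_iter_coeff)
  have degQ: "degree Q = m + 1" unfolding Q_def pderiv_iter_degree degP using mN by (simp add: r_def)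
  have "coeff Q (m + 1) \<noteq> 0"
    using mN by (simp add: cQ cP r_def esym_0[OF A(1)])
  then have Qnz: "Q \<noteq> 0" by auto
  define L where "L = lead_coeff Q"
  define zz where "zz = (\<lambda>y::real. - y)"
  have Qs: "Q = smult L (\<Prod>y\<in>R'. [:-y, 1:])"
    unfolding L_def by (rule roots_split[OF Qnz R'(1) _ R'(3)]) (simp add: cR' degQ)
  have cPr: "\<And>i. coeff (\<Prod>y\<in>R'. [:-y, 1:]) i = (if i \<le> m + 1 then esym (m + 1 - i) R' zz else 0)"
    using coeff_prod_linear[OF R'(1), of zz] cR' by (simp add: zz_def)
  have cc: "\<And>i. i \<le> m + 1 \<Longrightarrow> L * esym (m + 1 - i) R' zz = esym (m + 1 - i) A x * (fact (i + r) / fact i)"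
  proof -
    fix i assume i: "i \<le> m + 1"
    have "coeff Q i = L * esym (m + 1 - i) R' zz" using i by (subst Qs) (simp add: cPr)
    moreover have "coeff Q i = esym (m + 1 - i) A x * (fact (i + r) / fact i)"
      using i mN by (simp add: cQ cP r_def)
    ultimately show "L * esym (m + 1 - i) R' zz = esym (m + 1 - i) A x * (fact (i + r) / fact i)" by simp
  qed
  define a where "a = esym (m - 1) A x"
  define b where "b = esym m A x"
  define c where "c = esym (m + 1) A x"
  define F where "F = (fact r :: real)"
  define rr where "rr = real r"
  define mm where "mm = real m"
  have Fpos: "F > 0" by (simp add: F_def)
  have c0: "L * esym (m + 1) R' zz = c * F" using cc[of 0] by (simp add: c_def F_def)
  have c1: "L * esym m R' zz = b * ((rr + 1) * F)" using cc[of 1] by (simp add: b_def F_def rr_def)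
  have c2: "L * esym (m - 1) R' zz = a * ((rr + 2) * (rr + 1) * F / 2)"
  proof -
    have "m + 1 - 2 = m - 1" by simp
    then have "L * esym (m - 1) R' zz = a * (fact (2 + r) / fact 2)" using cc[of 2] A(3)
      by (simp add: a_def)
    moreover have "fact (2 + r) = (rr + 2) * (rr + 1) * F"
      by (simp add: F_def rr_def numeral_2_eq_2 algebra_simps)
    ultimately show ?thesis by simp
  qed
  have nt: "2 * real (m + 1) * esym (m + 1 - 2) R' zz * esym (m + 1) R' zz
      \<le> (real (m + 1) - 1) * (esym (m + 1 - 1) R' zz)\<^sup>2"
    by (rule newton_top[OF R'(1) cR']) (use A(3) in simp)
  have e1: "m + 1 - 2 = m - 1" "m + 1 - 1 = m" by simp_all
  have nt2: "2 * (mm + 1) * esym (m - 1) R' zz * esym (m + 1) R' zz \<le> mm * (esym m R' zz)\<^sup>2"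
    using nt unfolding e1 by (simp add: mm_def algebra_simps)
  have "L\<^sup>2 * (2 * (mm + 1) * esym (m - 1) R' zz * esym (m + 1) R' zz) \<le> L\<^sup>2 * (mm * (esym m R' zz)\<^sup>2)"
    by (rule mult_left_mono[OF nt2]) simp
  then have h: "2 * (mm + 1) * (L * esym (m - 1) R' zz) * (L * esym (m + 1) R' zz) \<le> mm * (L * esym m R' zz)\<^sup>2"
    by (simp add: power2_eq_square algebra_simps)
  then have h1: "((rr + 1) * F\<^sup>2) * ((mm + 1) * (rr + 2) * (a * c)) \<le> ((rr + 1) * F\<^sup>2) * (mm * (rr + 1) * b\<^sup>2)"
    unfolding c0 c1 c2 by (simp add: power2_eq_square algebra_simps)
  have pos: "(rr + 1) * F\<^sup>2 > 0" using Fpos by (simp add: rr_def)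
  have h2: "(mm + 1) * (rr + 2) * (a * c) \<le> mm * (rr + 1) * b\<^sup>2"
    using h1 pos by (simp add: mult_le_cancel_left_pos)
  have mpos: "mm * (rr + 1) > 0" using A(3) by (simp add: mm_def rr_def)
  have "a * c \<le> b\<^sup>2"
  proof (cases "a * c \<le> 0")
    case True then show ?thesis by (meson order_trans zero_le_power2)
  next
    case False
    have "mm * (rr + 1) * (a * c) \<le> (mm + 1) * (rr + 2) * (a * c)"
      using False by (intro mult_right_mono) (auto simp: mm_def rr_def intro!: mult_mono)
    also have "\<dots> \<le> mm * (rr + 1) * b\<^sup>2" by (rule h2)
    finally show ?thesis using mpos by (simp add: mult_le_cancel_left_pos)
  qed
  then show ?thesis by (simp add: a_def b_def c_def)
qed

lemma esym_isCont: "isCont (\<lambda>e. esym m A (\<lambda>a. x a + e * d a)) e0"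
  unfolding esym_def by (intro continuous_intros)

lemma ev_neq_at_right: "\<forall>\<^sub>F e in at_right (0::real). e \<noteq> c"
proof (cases "c \<le> 0")
  case True
  then show ?thesis unfolding eventually_at_right_field by (intro exI[of _ 1]) auto
next
  case False
  then show ?thesis unfolding eventually_at_right_field by (intro exI[of _ c]) auto
qed

lemma newton:
  fixes x :: "'b \<Rightarrow> real"
  assumes A: "finite A" "1 \<le> m"
  shows "esym (m - 1) A x * esym (m + 1) A x \<le> (esym m A x)\<^sup>2"
proof -
  obtain f :: "'b \<Rightarrow> nat" and k where f: "f ` A = {i. i < k}" "inj_on f A"
    using finite_imp_inj_to_nat_seg[OF A(1)] by blast
  define d where "d = (\<lambda>a. real (f a))"
  define y where "y = (\<lambda>e a. x a + e * d a)"
  define g where "g = (\<lambda>e. (esym m A (y e))\<^sup>2 - esym (m - 1) A (y e) * esym (m + 1) A (y e))"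
  have ev1: "\<forall>\<^sub>F e in at_right (0::real). \<forall>p\<in>A \<times> A. fst p \<noteq> snd p \<longrightarrow> y e (fst p) \<noteq> y e (snd p)"
  proof (rule eventually_ball_finite)
    show "finite (A \<times> A)" using A(1) by simp
    show "\<forall>p\<in>A \<times> A. \<forall>\<^sub>F e in at_right 0. fst p \<noteq> snd p \<longrightarrow> y e (fst p) \<noteq> y e (snd p)"
    proof
      fix p assume p: "p \<in> A \<times> A"
      obtain a b where ab: "p = (a, b)" by (cases p)
      show "\<forall>\<^sub>F e in at_right 0. fst p \<noteq> snd p \<longrightarrow> y e (fst p) \<noteq> y e (snd p)"
      proof (cases "a = b")
        case True then show ?thesis using ab by simp
      next
        case False
        then have dne: "d a \<noteq> d b" using f(2) p ab by (auto simp: d_def inj_on_def)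
        show ?thesis
          using ev_neq_at_right[of "(x b - x a) / (d a - d b)"]
        proof (rule eventually_mono)
          fix e assume ne: "e \<noteq> (x b - x a) / (d a - d b)"
          show "fst p \<noteq> snd p \<longrightarrow> y e (fst p) \<noteq> y e (snd p)"
          proof
            assume "fst p \<noteq> snd p"
            show "y e (fst p) \<noteq> y e (snd p)"
            proof
              assume "y e (fst p) = y e (snd p)"
              then have "x a + e * d a = x b + e * d b" using ab by (simp add: y_def)
              then have "e * (d a - d b) = x b - x a" by (simp add: algebra_simps)
              then have "e = (x b - x a) / (d a - d b)" using dne by (simp add: field_simps)
              then show False using ne by simp
            qed
          qed
        qed
      qed
    qed
  qed
  have ev: "\<forall>\<^sub>F e in at_right (0::real). 0 \<le> g e"
    using ev1
  proof (rule eventually_mono)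
    fix e assume H: "\<forall>p\<in>A \<times> A. fst p \<noteq> snd p \<longrightarrow> y e (fst p) \<noteq> y e (snd p)"
    have "inj_on (y e) A"
    proof (rule inj_onI)
      fix a b assume "a \<in> A" "b \<in> A" "y e a = y e b"
      then show "a = b" using H[rule_format, of "(a, b)"] by auto
    qed
    then show "0 \<le> g e" using newton_distinct[OF A(1) _ A(2), of "y e"] by (simp add: g_def)
  qed
  have "isCont g 0" unfolding g_def y_def by (intro continuous_intros esym_isCont)
  then have "(g \<longlongrightarrow> g 0) (at 0)" by (simp add: isCont_def)
  then have lim: "(g \<longlongrightarrow> g 0) (at_right 0)" by (rule tendsto_within_subset) simp
  have "0 \<le> g 0" by (rule tendsto_lowerbound[OF lim ev]) simp
  moreover have "y 0 = x" by (simp add: y_def fun_eq_iff)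
  ultimately show ?thesis by (simp add: g_def)
qed

lemma in_Gamma_pos: "in_Gamma k A mu \<Longrightarrow> 1 \<le> j \<Longrightarrow> j \<le> k \<Longrightarrow> esym j A mu > 0"
  unfolding in_Gamma_def by blast

lemma in_Gamma_pos0: "finite A \<Longrightarrow> in_Gamma k A mu \<Longrightarrow> j \<le> k \<Longrightarrow> esym j A mu > 0"
  by (cases j) (auto simp: esym_0 in_Gamma_def)

lemma in_Gamma_mono: "in_Gamma k A mu \<Longrightarrow> k' \<le> k \<Longrightarrow> in_Gamma k' A mu"
  unfolding in_Gamma_def by auto

lemma gamma_remove:
  fixes mu :: "'b \<Rightarrow> real"
  assumes "finite A" "i \<in> A"
  shows "in_Gamma k A mu \<Longrightarrow> in_Gamma (k - 1) (A - {i}) mu"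
proof (induction k)
  case 0 then show ?case by (simp add: in_Gamma_def)
next
  case (Suc k')
  have G': "in_Gamma k' A mu" using Suc.prems in_Gamma_mono by fastforce
  have IH: "in_Gamma (k' - 1) (A - {i}) mu" using Suc.IH G' by blast
  show ?case
  proof (cases k')
    case 0 then show ?thesis by (simp add: in_Gamma_def)
  next
    case (Suc t)
    let ?L = "A - {i}"
    have fL: "finite ?L" using assms by simp
    define a where "a = esym t ?L mu"
    define b where "b = esym (Suc t) ?L mu"
    define c where "c = esym (Suc (Suc t)) ?L mu"
    have apos: "a > 0" unfolding a_def using in_Gamma_pos0[OF fL IH] Suc by simp
    have s1: "mu i * a + b > 0"
      using in_Gamma_pos[OF Suc.prems, of "Suc t"] Suc esym_remove[OF assms, of t mu]
      by (simp add: a_def b_def)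
    have s2: "mu i * b + c > 0"
      using in_Gamma_pos[OF Suc.prems, of "Suc (Suc t)"] Suc esym_remove[OF assms, of "Suc t" mu]
      by (simp add: b_def c_def)
    have nw: "a * c \<le> b\<^sup>2"
      using newton[OF fL, of "Suc t" mu] by (simp add: a_def b_def c_def)
    have "b > 0"
    proof (rule ccontr)
      assume "\<not> b > 0"
      then have nb: "- b \<ge> 0" by simp
      have "mu i * a > - b" using s1 by simp
      have "a * c > a * (- mu i * b)" using s2 apos by (intro mult_strict_left_mono) auto
      moreover have "a * (- mu i * b) = (mu i * a) * (- b)" by (simp add: algebra_simps)
      moreover have "(mu i * a) * (- b) \<ge> (- b) * (- b)"
        using \<open>mu i * a > - b\<close> nb by (intro mult_right_mono) auto
      ultimately have "a * c > b\<^sup>2" by (simp add: power2_eq_square algebra_simps)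
      then show False using nw by simp
    qed
    have "in_Gamma (Suc t) ?L mu"
      unfolding in_Gamma_def
    proof (intro allI impI)
      fix j assume j: "1 \<le> j \<and> j \<le> Suc t"
      show "esym j ?L mu > 0"
      proof (cases "j = Suc t")
        case True then show ?thesis using \<open>b > 0\<close> b_def by simp
      next
        case False then show ?thesis using IH j Suc by (auto simp: in_Gamma_def)
      qed
    qed
    then show ?thesis using Suc by simp
  qed
qed

lemma newton_chain:
  fixes mu :: "'b \<Rightarrow> real"
  assumes "finite L" "in_Gamma (k - 1) L mu" "1 \<le> l" "l < k"
  shows "esym k L mu * esym (l - 1) L mu \<le> esym l L mu * esym (k - 1) L mu"
proof -
  have "l \<le> k - 1" using assms by simp
  then have "esym (Suc (k - 1)) L mu * esym (l - 1) L mu \<le> esym l L mu * esym (k - 1) L mu"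
  proof (induction rule: dec_induct)
    case base
    show ?case using newton[OF assms(1) assms(3), of mu] assms(3)
      by (simp add: power2_eq_square mult.commute)
  next
    case (step n)
    have pn: "esym n L mu > 0" using in_Gamma_pos[OF assms(2), of n] step assms by simp
    have pn1: "esym (Suc n) L mu > 0" using in_Gamma_pos[OF assms(2), of "Suc n"] step assms by simp
    have pl1: "esym (l - 1) L mu > 0" using in_Gamma_pos0[OF assms(1,2), of "l - 1"] step assms by simp
    have nw: "esym n L mu * esym (Suc (Suc n)) L mu \<le> (esym (Suc n) L mu)\<^sup>2"
      using newton[OF assms(1), of "Suc n" mu] by simp
    have "esym n L mu * (esym (Suc (Suc n)) L mu * esym (l - 1) L mu)
        = (esym n L mu * esym (Suc (Suc n)) L mu) * esym (l - 1) L mu" by simp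
    also have "\<dots> \<le> (esym (Suc n) L mu)\<^sup>2 * esym (l - 1) L mu"
      using nw pl1 by (intro mult_right_mono) auto
    also have "\<dots> = esym (Suc n) L mu * (esym (Suc n) L mu * esym (l - 1) L mu)"
      by (simp add: power2_eq_square)
    also have "\<dots> \<le> esym (Suc n) L mu * (esym l L mu * esym n L mu)"
      using step.IH pn1 by (intro mult_left_mono) auto
    also have "\<dots> = esym n L mu * (esym l L mu * esym (Suc n) L mu)" by simp
    finally show ?case using pn by (simp add: mult_le_cancel_left_pos)
  qed
  then show ?thesis using assms by simp
qed

lemma gamma_step:
  fixes mu :: "'b \<Rightarrow> real"
  assumes A: "finite A" "i \<in> A" and G: "in_Gamma k A mu" and s: "s \<ge> 0" and lk: "l < k"
  defines "mu' \<equiv> mu(i := mu i + s)"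
  shows "in_Gamma k A mu' \<and> esym k A mu / esym l A mu \<le> esym k A mu' / esym l A mu'"
proof -
  let ?L = "A - {i}"
  have fL: "finite ?L" using A by simp
  have GL: "in_Gamma (k - 1) ?L mu" using gamma_remove[OF A G] .
  have same: "\<And>m. esym m ?L mu' = esym m ?L mu"
    by (rule esym_cong) (simp add: mu'_def)
  have rec: "\<And>m. esym (Suc m) A mu' = esym (Suc m) A mu + s * esym m ?L mu"
    using esym_remove[OF A, of _ mu'] esym_remove[OF A, of _ mu] same
    by (simp add: mu'_def algebra_simps)
  have G': "in_Gamma k A mu'"
    unfolding in_Gamma_def
  proof (intro allI impI)
    fix j assume j: "1 \<le> j \<and> j \<le> k"
    then obtain m where m: "j = Suc m" by (cases j) auto
    have "esym m ?L mu > 0" using in_Gamma_pos0[OF fL GL, of m] j m by simp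
    then have "s * esym m ?L mu \<ge> 0" using s by simp
    moreover have "esym j A mu > 0" using G j by (simp add: in_Gamma_def)
    ultimately show "esym j A mu' > 0" using rec[of m] m by simp
  qed
  obtain k' where k': "k = Suc k'" using lk by (cases k) auto
  have ratio: "esym k A mu / esym l A mu \<le> esym k A mu' / esym l A mu'"
  proof (cases l)
    case 0
    have "esym k A mu \<le> esym k A mu'"
      using rec[of k'] k' in_Gamma_pos0[OF fL GL, of k'] s by simp
    then show ?thesis using 0 A by (simp add: esym_0)
  next
    case (Suc l')
    define a where "a = esym k A mu"
    define b where "b = esym k' ?L mu"
    define c where "c = esym l A mu"
    define d where "d = esym l' ?L mu"
    have cpos: "c > 0" using in_Gamma_pos[OF G, of l] Suc lk by (simp add: c_def)
    have "l' \<le> k - 1" using Suc lk by simp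
    then have dpos: "d \<ge> 0" using in_Gamma_pos0[OF fL GL, of l'] by (simp add: d_def)
    have e1: "esym k A mu' = a + s * b" using rec[of k'] k' by (simp add: a_def b_def)
    have e2: "esym l A mu' = c + s * d" using rec[of l'] Suc by (simp add: c_def d_def)
    have ra: "a = mu i * b + esym k ?L mu" using esym_remove[OF A, of k' mu] k' by (simp add: a_def b_def)
    have rc: "c = mu i * d + esym l ?L mu" using esym_remove[OF A, of l' mu] Suc by (simp add: c_def d_def)
    have ch: "esym k ?L mu * d \<le> esym l ?L mu * b"
      using newton_chain[OF fL GL, of l] Suc lk k' by (simp add: b_def d_def)
    have key: "a * d \<le> c * b" using ch by (simp add: ra rc algebra_simps)
    have "a * (c + s * d) \<le> c * (a + s * b)"
    proof -
      have "s * (a * d) \<le> s * (c * b)" using key s by (rule mult_left_mono)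
      then show ?thesis by (simp add: algebra_simps)
    qed
    moreover have "c + s * d > 0" using cpos dpos s by (simp add: add_pos_nonneg)
    ultimately have "a / c \<le> (a + s * b) / (c + s * d)" using cpos
      by (simp add: divide_simps mult.commute)
    then show ?thesis using e1 e2 by (simp add: a_def c_def)
  qed
  show ?thesis using G' ratio by simp
qed

lemma gamma_mono:
  fixes mu nu :: "'b \<Rightarrow> real"
  assumes A: "finite A" and G: "in_Gamma k A mu" and le: "\<forall>a\<in>A. mu a \<le> nu a" and lk: "l < k"
  shows "in_Gamma k A nu \<and> esym k A mu / esym l A mu \<le> esym k A nu / esym l A nu"
proof -
  define rho where "rho = (\<lambda>B a. if a \<in> B then nu a else mu a)"
  have "\<And>B. B \<subseteq> A \<Longrightarrow> in_Gamma k A (rho B) \<and> esym k A mu / esym l A mu \<le> esym k A (rho B) / esym l A (rho B)"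
  proof -
    fix B assume "B \<subseteq> A"
    then have fB: "finite B" using A finite_subset by blast
    show "in_Gamma k A (rho B) \<and> esym k A mu / esym l A mu \<le> esym k A (rho B) / esym l A (rho B)"
      using fB \<open>B \<subseteq> A\<close>
    proof (induction B rule: finite_induct)
      case empty
      have "rho {} = mu" by (simp add: rho_def fun_eq_iff)
      then show ?case using G by simp
    next
      case (insert b B)
      have bA: "b \<in> A" using insert by simp
      have IH: "in_Gamma k A (rho B) \<and> esym k A mu / esym l A mu \<le> esym k A (rho B) / esym l A (rho B)"
        using insert by simp
      have eq: "rho (insert b B) = (rho B)(b := rho B b + (nu b - mu b))"
        using insert by (simp add: rho_def fun_eq_iff)
      have "nu b - mu b \<ge> 0" using le bA by simp
      from gamma_step[OF A bA conjunct1[OF IH] this lk] IH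
      show ?case unfolding eq by (meson order_trans)
    qed
  qed
  from this[of A] have "in_Gamma k A (rho A) \<and> esym k A mu / esym l A mu \<le> esym k A (rho A) / esym l A (rho A)"
    by simp
  moreover have "\<And>m. esym m A (rho A) = esym m A nu" by (rule esym_cong) (simp add: rho_def)
  ultimately show ?thesis by (simp add: in_Gamma_def)
qed

definition symbil :: "('a::real_inner \<Rightarrow> 'a \<Rightarrow> real) \<Rightarrow> bool" where
  "symbil B \<longleftrightarrow> (\<forall>v w. B v w = B w v) \<and> (\<forall>u v w. B (u + v) w = B u w + B v w)
     \<and> (\<forall>c v w. B (c *\<^sub>R v) w = c * B v w)"

lemma symbil_inner: "symbil (\<lambda>v w. v \<bullet> w)"
  by (simp add: symbil_def inner_commute inner_add_left inner_add_right)

lemma symbil_D: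
  assumes "symbil B"
  shows "B v w = B w v" "B (u + v) w = B u w + B v w" "B (c *\<^sub>R v) w = c * B v w"
    "B w (u + v) = B w u + B w v" "B w (c *\<^sub>R v) = c * B w v" "B 0 w = 0" "B w 0 = 0"
proof -
  show s: "B v w = B w v" "B (u + v) w = B u w + B v w" "B (c *\<^sub>R v) w = c * B v w"
    using assms by (auto simp: symbil_def)
  show "B w (u + v) = B w u + B w v" using assms unfolding symbil_def by metis
  show "B w (c *\<^sub>R v) = c * B w v" using assms unfolding symbil_def by metis
  show z: "B 0 w = 0" using assms unfolding symbil_def by (metis mult_zero_left scale_zero_left)
  show "B w 0 = 0" using assms unfolding symbil_def by (metis mult_zero_left scale_zero_left)
qed

lemma symbil_sum_left:
  assumes "symbil B" "finite I"
  shows "B (\<Sum>i\<in>I. f i) w = (\<Sum>i\<in>I. B (f i) w)"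
  using assms(2) by (induction I rule: finite_induct) (simp_all add: symbil_D[OF assms(1)])

lemma symbil_diag:
  assumes sb: "symbil B" and fI: "finite I" and dg: "\<forall>i\<in>I. \<forall>k\<in>I. i \<noteq> k \<longrightarrow> B (e i) (e k) = 0"
  shows "B (\<Sum>i\<in>I. c i *\<^sub>R e i) (\<Sum>i\<in>I. c i *\<^sub>R e i) = (\<Sum>i\<in>I. (c i)\<^sup>2 * B (e i) (e i))"
proof -
  let ?V = "\<Sum>i\<in>I. c i *\<^sub>R e i"
  have inner: "B (e i) ?V = c i * B (e i) (e i)" if i: "i \<in> I" for i
  proof -
    have "B (e i) ?V = B ?V (e i)" using symbil_D(1)[OF sb] by metis
    also have "\<dots> = (\<Sum>k\<in>I. c k * B (e k) (e i))"
      by (simp add: symbil_sum_left[OF sb fI] symbil_D(3)[OF sb])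
    also have "\<dots> = (\<Sum>k\<in>I. if k = i then c i * B (e i) (e i) else 0)"
      by (rule sum.cong[OF refl]) (use dg i in auto)
    also have "\<dots> = c i * B (e i) (e i)" using i fI by simp
    finally show ?thesis .
  qed
  have "B ?V ?V = (\<Sum>i\<in>I. c i * B (e i) ?V)"
    by (simp add: symbil_sum_left[OF sb fI] symbil_D[OF sb])
  also have "\<dots> = (\<Sum>i\<in>I. (c i)\<^sup>2 * B (e i) (e i))"
    by (rule sum.cong[OF refl]) (simp add: inner power2_eq_square)
  finally show ?thesis .
qed

lemma symbil_expand2:
  assumes sb: "symbil B"
  shows "B (u + t *\<^sub>R w) (u + t *\<^sub>R w) = B u u + 2 * t * B u w + t\<^sup>2 * B w w"
  using symbil_D[OF sb] by (simp add: power2_eq_square algebra_simps)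

lemma symbil_scale2:
  assumes sb: "symbil B"
  shows "B (c *\<^sub>R v) (c *\<^sub>R v) = c\<^sup>2 * B v v"
  using symbil_D[OF sb] by (simp add: power2_eq_square)

lemma lagrange_real:
  fixes \<beta> \<gamma> :: real
  assumes "\<And>t. 2 * t * \<beta> + t\<^sup>2 * \<gamma> \<le> 0"
  shows "\<beta> = 0"
proof (rule ccontr)
  assume nz: "\<beta> \<noteq> 0"
  define D where "D = \<bar>\<gamma>\<bar> + 1"
  have Dpos: "D > 0" by (simp add: D_def)
  define t where "t = \<beta> / D"
  have "2 * t * \<beta> + t\<^sup>2 * \<gamma> = \<beta>\<^sup>2 / D\<^sup>2 * (2 * D + \<gamma>)"
    using Dpos by (simp add: t_def power2_eq_square field_simps)
  moreover have "2 * D + \<gamma> > 0" unfolding D_def by (cases "\<gamma> \<ge> 0") auto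
  moreover have "\<beta>\<^sup>2 / D\<^sup>2 > 0" using nz Dpos by simp
  ultimately have "2 * t * \<beta> + t\<^sup>2 * \<gamma> > 0" by (metis mult_pos_pos times_divide_eq_left mult.commute)
  then show False using assms[of t] by simp
qed

definition Cset :: "'a::euclidean_space \<Rightarrow> nat \<Rightarrow> (nat \<Rightarrow> 'a) \<Rightarrow> 'a set" where
  "Cset x j e = {v. norm v = 1 \<and> v \<bullet> x = 0 \<and> (\<forall>i<j. v \<bullet> e i = 0)}"

lemma Cset_cong: "(\<And>i. i < j \<Longrightarrow> e' i = e i) \<Longrightarrow> Cset x j e' = Cset x j e"
  unfolding Cset_def by auto

lemma Cset_compact: "compact (Cset x j e)"
proof -
  have eq: "Cset x j e = sphere 0 1 \<inter> ({v. x \<bullet> v = 0} \<inter> (\<Inter>i\<in>{..<j}. {v. e i \<bullet> v = 0}))"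
    unfolding Cset_def by (auto simp: inner_commute)
  show ?thesis unfolding eq
    by (intro compact_Int_closed compact_sphere closed_Int closed_INT closed_hyperplane ballI)
qed

lemma Cset_nonempty:
  fixes x :: "'a::euclidean_space"
  assumes "DIM('a) = n + 1" "j < n"
  shows "Cset x j e \<noteq> {}"
proof -
  let ?S = "insert x (e ` {..<j})"
  have "dim ?S \<le> card ?S" by (rule dim_le_card) (auto intro: span_base)
  also have "\<dots> \<le> Suc j" by (metis card_insert_le_m1 card_image_le card_lessThan finite_lessThan le_SucI
        finite_imageI card_insert_if le_refl not_less_eq_eq)
  finally have dS: "dim ?S < DIM('a)" using assms by simp
  obtain y where y: "y \<noteq> 0" "\<And>z. z \<in> span ?S \<Longrightarrow> orthogonal y z"
    using orthogonal_to_subspace_exists[OF dS] by blast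
  define v where "v = (1 / norm y) *\<^sub>R y"
  have "v \<in> Cset x j e"
    unfolding Cset_def v_def using y(1) y(2)[OF span_base] by (auto simp: orthogonal_def)
  then show ?thesis by blast
qed

definition good :: "('a::euclidean_space \<Rightarrow> 'a \<Rightarrow> real) \<Rightarrow> 'a \<Rightarrow> nat \<Rightarrow> (nat \<Rightarrow> 'a) \<Rightarrow> bool" where
  "good B x j e \<longleftrightarrow> (\<forall>i<j. e i \<in> Cset x i e \<and> (\<forall>v\<in>Cset x i e. B v v \<le> B (e i) (e i)))"

lemma good_exists:
  fixes x :: "'a::euclidean_space"
  assumes dim: "DIM('a) = n + 1" and cont: "continuous_on UNIV (\<lambda>v. B v v)"
  shows "j \<le> n \<Longrightarrow> \<exists>e. good B x j e"
proof (induction j)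
  case 0 then show ?case by (simp add: good_def)
next
  case (Suc j)
  then obtain e where e: "good B x j e" by auto
  have jn: "j < n" using Suc by simp
  obtain v where v: "v \<in> Cset x j e" "\<forall>w\<in>Cset x j e. B w w \<le> B v v"
    using continuous_attains_sup[OF Cset_compact Cset_nonempty[OF dim jn] continuous_on_subset[OF cont]]
    by blast
  define e' where "e' = e(j := v)"
  have C: "\<And>i. i \<le> j \<Longrightarrow> Cset x i e' = Cset x i e" by (rule Cset_cong) (simp add: e'_def)
  have "good B x (Suc j) e'"
    unfolding good_def
  proof (intro allI impI)
    fix i assume i: "i < Suc j"
    show "e' i \<in> Cset x i e' \<and> (\<forall>w\<in>Cset x i e'. B w w \<le> B (e' i) (e' i))"
    proof (cases "i = j")
      case True then show ?thesis using v C[of j] by (simp add: e'_def)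
    next
      case False
      then have "i < j" using i by simp
      then show ?thesis using e C[of i] by (simp add: good_def e'_def)
    qed
  qed
  then show ?case by blast
qed

lemma spec_frame:
  fixes x :: "'a::euclidean_space"
  assumes dim: "DIM('a) = n + 1" and nx: "norm x = 1" and sb: "symbil B"
    and cont: "continuous_on UNIV (\<lambda>v. B v v)"
  shows "\<exists>e. tframe n x e \<and> (\<forall>i<n. \<forall>k<n. i \<noteq> k \<longrightarrow> B (e i) (e k) = 0)
     \<and> (\<forall>i k. i \<le> k \<longrightarrow> k < n \<longrightarrow> B (e k) (e k) \<le> B (e i) (e i))
     \<and> (\<forall>k<n. \<forall>v. norm v = 1 \<longrightarrow> v \<bullet> x = 0 \<longrightarrow> (\<forall>i<k. v \<bullet> e i = 0) \<longrightarrow> B v v \<le> B (e k) (e k))"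
proof -
  obtain e where g: "good B x n e" using good_exists[where n=n and B=B and x=x and j=n, OF dim cont] by auto
  have inC: "\<And>i. i < n \<Longrightarrow> e i \<in> Cset x i e" and mx: "\<And>i v. i < n \<Longrightarrow> v \<in> Cset x i e \<Longrightarrow> B v v \<le> B (e i) (e i)"
    using g by (auto simp: good_def)
  have n1: "\<And>i. i < n \<Longrightarrow> norm (e i) = 1" using inC by (simp add: Cset_def)
  have ox: "\<And>i. i < n \<Longrightarrow> e i \<bullet> x = 0" using inC by (simp add: Cset_def)
  have oe: "\<And>i k. i < n \<Longrightarrow> k < i \<Longrightarrow> e i \<bullet> e k = 0" using inC by (simp add: Cset_def)
  have orth: "\<And>i k. i < n \<Longrightarrow> k < n \<Longrightarrow> e i \<bullet> e k = (if i = k then 1 else 0)"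
  proof -
    fix i k assume ik: "i < n" "k < n"
    show "e i \<bullet> e k = (if i = k then 1 else 0)"
    proof (cases i k rule: linorder_cases)
      case less then show ?thesis using oe[of k i] ik by (simp add: inner_commute)
    next
      case equal then show ?thesis using n1[of i] ik by (simp add: norm_eq_1)
    next
      case greater then show ?thesis using oe[of i k] ik by simp
    qed
  qed
  have tf: "tframe n x e" unfolding tframe_def using orth ox by simp
  have dg1: "B (e i) (e k) = 0" if ik: "i < k" "k < n" for i k
  proof -
    let ?u = "e i" and ?w = "e k"
    have uw: "?u \<bullet> ?w = 0" "?u \<bullet> ?u = 1" "?w \<bullet> ?w = 1" using orth[of i k] orth[of i i] orth[of k k] ik by auto
    have ineq: "2 * t * B ?u ?w + t\<^sup>2 * (B ?w ?w - B ?u ?u) \<le> 0" for t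
    proof -
      define N where "N = norm (?u + t *\<^sub>R ?w)"
      have N2: "N\<^sup>2 = 1 + t\<^sup>2"
        unfolding N_def power2_norm_eq_inner using uw
        by (simp add: inner_add_left inner_add_right inner_commute power2_eq_square)
      then have Npos: "N > 0" using N_def by (metis add_pos_nonneg norm_ge_zero order_less_le zero_le_power2 zero_less_one power2_eq_square mult_zero_left)
      define v where "v = (1 / N) *\<^sub>R (?u + t *\<^sub>R ?w)"
      have "v \<in> Cset x i e"
        unfolding Cset_def
      proof (intro CollectI conjI allI impI)
        show "norm v = 1" using Npos by (simp add: v_def N_def)
        show "v \<bullet> x = 0" using ox ik by (simp add: v_def inner_add_left)
        fix i' assume "i' < i"
        then show "v \<bullet> e i' = 0" using oe[of i i'] oe[of k i'] ik by (simp add: v_def inner_add_left)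
      qed
      then have "B v v \<le> B ?u ?u" using mx[of i v] ik by simp
      moreover have "?u + t *\<^sub>R ?w = N *\<^sub>R v" using Npos by (simp add: v_def)
      ultimately have "B (?u + t *\<^sub>R ?w) (?u + t *\<^sub>R ?w) \<le> N\<^sup>2 * B ?u ?u"
        using symbil_scale2[OF sb, of N v] by (simp add: mult_left_mono)
      then show ?thesis using symbil_expand2[OF sb, of ?u t ?w] N2 by (simp add: algebra_simps)
    qed
    show ?thesis by (rule lagrange_real[OF ineq])
  qed
  have dg: "\<forall>i<n. \<forall>k<n. i \<noteq> k \<longrightarrow> B (e i) (e k) = 0"
  proof (intro allI impI)
    fix i k assume ik: "i < n" "k < n" "i \<noteq> k"
    show "B (e i) (e k) = 0"
    proof (cases "i < k")
      case True then show ?thesis using dg1 ik by simp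
    next
      case False then have "k < i" using ik by simp
      then show ?thesis using dg1[of k i] ik symbil_D(1)[OF sb, of "e i" "e k"] by simp
    qed
  qed
  have dec: "\<forall>i k. i \<le> k \<longrightarrow> k < n \<longrightarrow> B (e k) (e k) \<le> B (e i) (e i)"
  proof (intro allI impI)
    fix i k assume ik: "i \<le> k" "k < n"
    have "e k \<in> Cset x i e" unfolding Cset_def using n1 ox oe ik by auto
    then show "B (e k) (e k) \<le> B (e i) (e i)" using mx ik by simp
  qed
  have mxp: "\<forall>k<n. \<forall>v. norm v = 1 \<longrightarrow> v \<bullet> x = 0 \<longrightarrow> (\<forall>i<k. v \<bullet> e i = 0) \<longrightarrow> B v v \<le> B (e k) (e k)"
    using mx unfolding Cset_def by blast
  show ?thesis using tf dg dec mxp by blast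
qed

definition orthonormal_on :: "nat set \<Rightarrow> (nat \<Rightarrow> 'a::real_inner) \<Rightarrow> bool" where
  "orthonormal_on I f \<longleftrightarrow> (\<forall>i\<in>I. \<forall>k\<in>I. f i \<bullet> f k = (if i = k then 1 else 0))"

lemma orth_delta:
  assumes "orthonormal_on I f" "finite I" "k \<in> I"
  shows "(\<Sum>i\<in>I. a i * (f i \<bullet> f k)) = a k"
proof -
  have "(\<Sum>i\<in>I. a i * (f i \<bullet> f k)) = (\<Sum>i\<in>I. if i = k then a k else 0)"
    by (rule sum.cong[OF refl]) (use assms in \<open>auto simp: orthonormal_on_def\<close>)
  also have "\<dots> = a k" using assms by simp
  finally show ?thesis .
qed

lemma orth_inj: "orthonormal_on I f \<Longrightarrow> inj_on f I"
  unfolding orthonormal_on_def inj_on_def by (metis one_neq_zero)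

lemma orth_indep:
  fixes f :: "nat \<Rightarrow> 'a::euclidean_space"
  assumes "orthonormal_on I f"
  shows "independent (f ` I)"
proof (rule pairwise_orthogonal_independent)
  show "pairwise orthogonal (f ` I)"
    using assms unfolding pairwise_def orthogonal_def orthonormal_on_def by auto
  show "0 \<notin> f ` I"
    using assms unfolding orthonormal_on_def by (metis imageE inner_zero_left zero_neq_one)
qed

lemma span_coef:
  fixes f :: "nat \<Rightarrow> 'a::euclidean_space"
  assumes "finite I" "inj_on f I" "v \<in> span (f ` I)"
  shows "\<exists>c. v = (\<Sum>i\<in>I. c i *\<^sub>R f i)"
proof -
  from assms(3) span_finite[of "f ` I"] assms(1) obtain u where u: "v = (\<Sum>y\<in>f ` I. u y *\<^sub>R y)"
    by auto
  also have "\<dots> = (\<Sum>i\<in>I. u (f i) *\<^sub>R f i)" by (rule sum.reindex[OF assms(2), unfolded comp_def])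
  finally show ?thesis by (rule exI[of _ "\<lambda>i. u (f i)"])
qed

lemma complete_onb:
  fixes f :: "nat \<Rightarrow> 'a::euclidean_space"
  assumes dim: "DIM('a) = card I" and fI: "finite I" and on: "orthonormal_on I f"
  shows "w = (\<Sum>i\<in>I. (w \<bullet> f i) *\<^sub>R f i)"
proof (rule ccontr)
  assume ne: "w \<noteq> (\<Sum>i\<in>I. (w \<bullet> f i) *\<^sub>R f i)"
  define w' where "w' = w - (\<Sum>i\<in>I. (w \<bullet> f i) *\<^sub>R f i)"
  have w0: "w' \<noteq> 0" using ne by (simp add: w'_def)
  have wo: "w' \<bullet> f k = 0" if k: "k \<in> I" for k
  proof -
    have "(\<Sum>i\<in>I. (w \<bullet> f i) *\<^sub>R f i) \<bullet> f k = (\<Sum>i\<in>I. (w \<bullet> f i) * (f i \<bullet> f k))"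
      by (simp add: inner_sum_left)
    also have "\<dots> = w \<bullet> f k" by (rule orth_delta[OF on fI k])
    finally show ?thesis by (simp add: w'_def inner_diff_left)
  qed
  have notin: "w' \<notin> f ` I"
  proof
    assume "w' \<in> f ` I"
    then obtain k where k: "k \<in> I" "w' = f k" by auto
    then have "w' \<bullet> f k = 1" using on by (simp add: orthonormal_on_def)
    then show False using wo[OF k(1)] by simp
  qed
  have "independent (insert w' (f ` I))"
  proof (rule pairwise_orthogonal_independent)
    show "pairwise orthogonal (insert w' (f ` I))"
      unfolding pairwise_def orthogonal_def
      using on wo by (auto simp: orthonormal_on_def inner_commute)
    show "0 \<notin> insert w' (f ` I)"
      using w0 on unfolding orthonormal_on_def by (auto, metis inner_zero_left zero_neq_one)
  qed
  from independent_bound[OF this] have "card (insert w' (f ` I)) \<le> DIM('a)" by simp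
  moreover have "card (insert w' (f ` I)) = Suc (card I)"
    using notin fI card_image[OF orth_inj[OF on]] by simp
  ultimately show False using dim by simp
qed

lemma parseval:
  fixes x :: "'a::euclidean_space"
  assumes dim: "DIM('a) = n + 1" and nx: "norm x = 1" and tf: "tframe n x e"
  shows "(\<Sum>i<n. (w \<bullet> e i)\<^sup>2) = (norm w)\<^sup>2 - (w \<bullet> x)\<^sup>2"
proof -
  define f where "f = (\<lambda>i. if i < n then e i else x)"
  have on: "orthonormal_on {..n} f"
    using tf nx unfolding orthonormal_on_def tframe_def f_def
    by (auto simp: inner_commute norm_eq_1)
  have "w = (\<Sum>i\<in>{..n}. (w \<bullet> f i) *\<^sub>R f i)"
    by (rule complete_onb[OF _ _ on]) (simp_all add: dim)
  then have "w \<bullet> w = w \<bullet> (\<Sum>i\<in>{..n}. (w \<bullet> f i) *\<^sub>R f i)" by simp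
  also have "\<dots> = (\<Sum>i\<in>{..n}. (w \<bullet> f i)\<^sup>2)" by (simp add: inner_sum_right power2_eq_square)
  also have "\<dots> = (\<Sum>i<n. (w \<bullet> e i)\<^sup>2) + (w \<bullet> x)\<^sup>2"
    by (simp add: lessThan_Suc_atMost[symmetric] f_def)
  finally show ?thesis by (simp add: power2_norm_eq_inner)
qed

lemma tframe_on: "tframe n x e \<Longrightarrow> J \<subseteq> {..<n} \<Longrightarrow> orthonormal_on J e"
  unfolding tframe_def orthonormal_on_def by (auto simp: subset_iff)

lemma weyl:
  fixes x :: "'a::euclidean_space"
  assumes dim: "DIM('a) = n + 1" and nx: "norm x = 1"
    and sb1: "symbil B1" and sb2: "symbil B2"
    and tf1: "tframe n x e1" and dg1: "\<forall>i<n. \<forall>k<n. i \<noteq> k \<longrightarrow> B1 (e1 i) (e1 k) = 0"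
    and dec1: "\<forall>i k. i \<le> k \<longrightarrow> k < n \<longrightarrow> B1 (e1 k) (e1 k) \<le> B1 (e1 i) (e1 i)"
    and tf2: "tframe n x e2"
    and mx2: "\<forall>k<n. \<forall>v. norm v = 1 \<longrightarrow> v \<bullet> x = 0 \<longrightarrow> (\<forall>i<k. v \<bullet> e2 i = 0) \<longrightarrow> B2 v v \<le> B2 (e2 k) (e2 k)"
    and cmp: "\<forall>v. v \<bullet> x = 0 \<longrightarrow> B1 v v \<le> M * B2 v v" and M: "M \<ge> 0" and j: "j < n"
  shows "B1 (e1 j) (e1 j) \<le> M * B2 (e2 j) (e2 j)"
proof -
  let ?I = "{..j}"
  have onI: "orthonormal_on ?I e1" by (rule tframe_on[OF tf1]) (use j in auto)
  have fI: "finite ?I" by simp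
  let ?T = "e1 ` ?I"
  define proj where "proj = (\<lambda>w. \<Sum>i\<in>?I. (w \<bullet> e1 i) *\<^sub>R e1 i)"
  let ?S = "(\<lambda>m. proj (e2 m)) ` {..<j}"
  have projT: "proj w \<in> span ?T" for w
    unfolding proj_def by (intro span_sum span_scale span_base) auto
  have sub: "span ?S \<subseteq> span ?T"
  proof -
    have "?S \<subseteq> span ?T" using projT by auto
    then have "span ?S \<subseteq> span (span ?T)" by (rule span_mono)
    then show ?thesis by (simp add: span_span)
  qed
  have dS: "dim (span ?S) \<le> j"
  proof -
    have "dim (span ?S) = dim ?S" by simp
    also have "\<dots> \<le> card ?S" by (rule dim_le_card) (auto intro: span_base)
    also have "\<dots> \<le> j" using card_image_le[of "{..<j}" "\<lambda>m. proj (e2 m)"] by simp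
    finally show ?thesis .
  qed
  have dT: "dim (span ?T) = Suc j"
  proof -
    have "dim (span ?T) = dim ?T" by simp
    also have "\<dots> = card ?T" by (rule dim_eq_card_independent[OF orth_indep[OF onI]])
    also have "\<dots> = Suc j" using card_image[OF orth_inj[OF onI]] by simp
    finally show ?thesis .
  qed
  have ps: "span ?S \<subset> span ?T" using sub dS dT by (metis le_imp_less_Suc less_irrefl psubsetI)
  obtain v where v: "v \<noteq> 0" "v \<in> span ?T" "\<And>y. y \<in> span ?S \<Longrightarrow> orthogonal v y"
    using orthogonal_to_subspace_exists_gen[OF ps] by blast
  obtain c where c: "v = (\<Sum>i\<in>?I. c i *\<^sub>R e1 i)"
    using span_coef[OF fI orth_inj[OF onI] v(2)] by blast
  have vx: "v \<bullet> x = 0" using tf1 j unfolding c tframe_def by (simp add: inner_sum_left)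
  have ve2: "v \<bullet> e2 m = 0" if m: "m < j" for m
  proof -
    have a: "v \<bullet> proj (e2 m) = 0" using v(3)[OF span_base] m by (auto simp: orthogonal_def)
    have b: "e1 i \<bullet> (e2 m - proj (e2 m)) = 0" if i: "i \<in> ?I" for i
    proof -
      have "e1 i \<bullet> proj (e2 m) = (\<Sum>i'\<in>?I. (e2 m \<bullet> e1 i') * (e1 i' \<bullet> e1 i))"
        unfolding proj_def by (simp add: inner_sum_right inner_commute)
      also have "\<dots> = e2 m \<bullet> e1 i" by (rule orth_delta[OF onI fI i])
      finally show ?thesis by (simp add: inner_diff_right inner_commute)
    qed
    have "v \<bullet> (e2 m - proj (e2 m)) = 0" unfolding c using b by (simp add: inner_sum_left)
    then show ?thesis using a by (simp add: inner_diff_right)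
  qed
  define d where "d = (\<lambda>i. c i / norm v)"
  define u where "u = (\<Sum>i\<in>?I. d i *\<^sub>R e1 i)"
  have uv: "u = (1 / norm v) *\<^sub>R v" unfolding u_def c d_def by (simp add: scaleR_sum_right)
  have nu: "norm u = 1" using v(1) uv by simp
  have ux: "u \<bullet> x = 0" using vx uv by simp
  have ue2: "\<forall>i<j. u \<bullet> e2 i = 0" using ve2 uv by simp
  have B2u: "B2 u u \<le> B2 (e2 j) (e2 j)" using mx2 j nu ux ue2 by blast
  have dgI: "\<forall>i\<in>?I. \<forall>k\<in>?I. i \<noteq> k \<longrightarrow> B1 (e1 i) (e1 k) = 0" using dg1 j by auto
  have dgI': "\<forall>i\<in>?I. \<forall>k\<in>?I. i \<noteq> k \<longrightarrow> e1 i \<bullet> e1 k = 0" using onI by (auto simp: orthonormal_on_def)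
  have B1u: "B1 u u = (\<Sum>i\<in>?I. (d i)\<^sup>2 * B1 (e1 i) (e1 i))"
    unfolding u_def by (rule symbil_diag[OF sb1 fI dgI])
  have uu: "u \<bullet> u = (\<Sum>i\<in>?I. (d i)\<^sup>2 * (e1 i \<bullet> e1 i))"
    unfolding u_def by (rule symbil_diag[OF symbil_inner fI dgI'])
  then have sd: "(\<Sum>i\<in>?I. (d i)\<^sup>2) = 1" using nu onI by (simp add: norm_eq_1 orthonormal_on_def)
  have "B1 (e1 j) (e1 j) = (\<Sum>i\<in>?I. (d i)\<^sup>2 * B1 (e1 j) (e1 j))"
    using sd by (simp add: sum_distrib_right[symmetric])
  also have "\<dots> \<le> (\<Sum>i\<in>?I. (d i)\<^sup>2 * B1 (e1 i) (e1 i))"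
    using dec1 j by (intro sum_mono mult_left_mono) auto
  also have "\<dots> = B1 u u" by (rule B1u[symmetric])
  also have "\<dots> \<le> M * B2 u u" using cmp ux by blast
  also have "\<dots> \<le> M * B2 (e2 j) (e2 j)" using B2u M by (rule mult_left_mono)
  finally show ?thesis .
qed

definition gam :: "'a::euclidean_space \<Rightarrow> 'a \<Rightarrow> real \<Rightarrow> 'a" where
  "gam x v t = cos (t * norm v) *\<^sub>R x + (sin (t * norm v) / norm v) *\<^sub>R v"

definition gam1 :: "'a::euclidean_space \<Rightarrow> 'a \<Rightarrow> real \<Rightarrow> 'a" where
  "gam1 x v t = (- norm v * sin (t * norm v)) *\<^sub>R x + cos (t * norm v) *\<^sub>R v"

lemma sphere_exp_gam: "sphere_exp x (t *\<^sub>R v) = gam x v t"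
proof (cases "v = 0 \<or> t = 0")
  case True then show ?thesis by (auto simp: sphere_exp_def gam_def)
next
  case False
  then have a: "norm v > 0" "t \<noteq> 0" by auto
  show ?thesis
  proof (cases "t > 0")
    case True
    then show ?thesis using a by (simp add: sphere_exp_def gam_def field_simps)
  next
    case False
    then have "t < 0" using a by simp
    then have "norm (t *\<^sub>R v) = - t * norm v" by simp
    then show ?thesis using a \<open>t < 0\<close> by (simp add: sphere_exp_def gam_def field_simps)
  qed
qed

lemma gam_0: "gam x v 0 = x" and gam1_0: "gam1 x v 0 = v"
  by (simp_all add: gam_def gam1_def)

lemma gam_deriv: "(gam x v has_vector_derivative gam1 x v t) (at t)"
proof (cases "v = 0")
  case True
  have "gam x v = (\<lambda>t. x)" using True by (simp add: gam_def fun_eq_iff)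
  moreover have "gam1 x v t = 0" using True by (simp add: gam1_def)
  ultimately show ?thesis by (simp add: has_vector_derivative_const)
next
  case False
  define a where "a = norm v"
  have a: "a \<noteq> 0" using False by (simp add: a_def)
  have d1: "((\<lambda>t. cos (t * a)) has_real_derivative (- sin (t * a) * a)) (at t)"
    by (auto intro!: derivative_eq_intros)
  have d2: "((\<lambda>t. sin (t * a) / a) has_real_derivative cos (t * a)) (at t)"
    using a by (auto intro!: derivative_eq_intros)
  have "((\<lambda>t. cos (t * a) *\<^sub>R x + (sin (t * a) / a) *\<^sub>R v) has_vector_derivative
      (cos (t * a) *\<^sub>R 0 + (- sin (t * a) * a) *\<^sub>R x) + ((sin (t * a) / a) *\<^sub>R 0 + cos (t * a) *\<^sub>R v)) (at t)"
    by (intro has_vector_derivative_add has_vector_derivative_scaleR d1 d2 has_vector_derivative_const)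
  then show ?thesis unfolding gam_def gam1_def a_def[symmetric] by (simp add: algebra_simps)
qed

lemma gam1_deriv0: "(gam1 x v has_vector_derivative (- (norm v)\<^sup>2) *\<^sub>R x) (at 0)"
proof -
  define a where "a = norm v"
  have d1: "((\<lambda>t. - a * sin (t * a)) has_real_derivative (- a * (cos (0 * a) * a))) (at 0)"
    by (auto intro!: derivative_eq_intros)
  have d2: "((\<lambda>t. cos (t * a)) has_real_derivative (- sin (0 * a) * a)) (at 0)"
    by (auto intro!: derivative_eq_intros)
  have "((\<lambda>t. (- a * sin (t * a)) *\<^sub>R x + cos (t * a) *\<^sub>R v) has_vector_derivative
      ((- a * sin (0 * a)) *\<^sub>R 0 + (- a * (cos (0 * a) * a)) *\<^sub>R x) + (cos (0 * a) *\<^sub>R 0 + (- sin (0 * a) * a) *\<^sub>R v)) (at 0)"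
    by (intro has_vector_derivative_add has_vector_derivative_scaleR d1 d2 has_vector_derivative_const)
  then show ?thesis unfolding gam1_def a_def[symmetric] by (simp add: power2_eq_square)
qed

lemma gam_norm:
  assumes "norm x = 1" "v \<bullet> x = 0"
  shows "norm (gam x v t) = 1"
proof (cases "v = 0")
  case True then show ?thesis using assms by (simp add: gam_def)
next
  case False
  have xx: "x \<bullet> x = 1" using assms by (simp add: norm_eq_1)
  define c where "c = cos (t * norm v)"
  define s where "s = sin (t * norm v) / norm v"
  have "(gam x v t) \<bullet> (gam x v t) = c\<^sup>2 * (x \<bullet> x) + 2 * c * s * (v \<bullet> x) + s\<^sup>2 * (v \<bullet> v)"
    unfolding gam_def c_def[symmetric] s_def[symmetric]
    by (simp add: inner_add_left inner_add_right inner_commute power2_eq_square algebra_simps)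
  also have "\<dots> = c\<^sup>2 + s\<^sup>2 * (norm v)\<^sup>2" using xx assms(2) by (simp add: power2_norm_eq_inner)
  also have "\<dots> = (cos (t * norm v))\<^sup>2 + (sin (t * norm v))\<^sup>2"
    using False by (simp add: c_def s_def power_divide)
  also have "\<dots> = 1" by simp
  finally show ?thesis by (simp add: norm_eq_1)
qed

lemma curve_derivs:
  fixes u :: "'a::euclidean_space \<Rightarrow> real"
  assumes S: "sphere 0 1 \<subseteq> S"
    and D1: "\<forall>y\<in>S. (u has_derivative blinfun_apply (f' y)) (at y)"
    and D2: "\<forall>y\<in>S. (f' has_derivative blinfun_apply (f'' y)) (at y)"
    and nx: "norm x = 1" and vx: "v \<bullet> x = 0"
  shows "\<forall>t. ((\<lambda>t. u (gam x v t)) has_real_derivative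
              blinfun_apply (f' (gam x v t)) (gam1 x v t)) (at t)"
    and "((\<lambda>t. blinfun_apply (f' (gam x v t)) (gam1 x v t)) has_real_derivative
          (blinfun_apply (blinfun_apply (f'' x) v) v - (norm v)\<^sup>2 * blinfun_apply (f' x) x)) (at 0)"
proof -
  have inS: "\<And>t. gam x v t \<in> S" using gam_norm[OF nx vx] S by auto
  show "\<forall>t. ((\<lambda>t. u (gam x v t)) has_real_derivative
              blinfun_apply (f' (gam x v t)) (gam1 x v t)) (at t)"
  proof
    fix t
    have Dg: "(u has_derivative blinfun_apply (f' (gam x v t))) (at (gam x v t) within (gam x v ` UNIV))"
      using D1 inS by (blast intro: has_derivative_at_withinI)
    have "((u \<circ> gam x v) has_vector_derivative blinfun_apply (f' (gam x v t)) (gam1 x v t)) (at t within UNIV)"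
      by (rule vector_derivative_diff_chain_within[OF _ Dg]) (simp add: gam_deriv)
    then show "((\<lambda>t. u (gam x v t)) has_real_derivative blinfun_apply (f' (gam x v t)) (gam1 x v t)) (at t)"
      by (simp add: has_real_derivative_iff_has_vector_derivative comp_def)
  qed
  have Dg2: "(f' has_derivative blinfun_apply (f'' (gam x v 0))) (at (gam x v 0) within (gam x v ` UNIV))"
    using D2 inS by (blast intro: has_derivative_at_withinI)
  have c1: "((f' \<circ> gam x v) has_vector_derivative blinfun_apply (f'' (gam x v 0)) (gam1 x v 0)) (at 0 within UNIV)"
    by (rule vector_derivative_diff_chain_within[OF _ Dg2]) (simp add: gam_deriv)
  then have c1': "((\<lambda>t. f' (gam x v t)) has_vector_derivative blinfun_apply (f'' x) v) (at 0)"
    by (simp add: comp_def gam_0 gam1_0)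
  have "((\<lambda>t. blinfun_apply (f' (gam x v t)) (gam1 x v t)) has_vector_derivative
      (blinfun_apply (f' (gam x v 0)) ((- (norm v)\<^sup>2) *\<^sub>R x) + blinfun_apply (blinfun_apply (f'' x) v) (gam1 x v 0))) (at 0)"
    by (rule bounded_bilinear.has_vector_derivative[OF bounded_bilinear_blinfun_apply c1' gam1_deriv0])
  then show "((\<lambda>t. blinfun_apply (f' (gam x v t)) (gam1 x v t)) has_real_derivative
          (blinfun_apply (blinfun_apply (f'' x) v) v - (norm v)\<^sup>2 * blinfun_apply (f' x) x)) (at 0)"
    by (simp add: has_real_derivative_iff_has_vector_derivative gam_0 gam1_0 blinfun.scaleR_right
        blinfun.minus_right algebra_simps)
qed

lemma sph_grad_hess:
  fixes u :: "'a::euclidean_space \<Rightarrow> real"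
  assumes S: "sphere 0 1 \<subseteq> S"
    and D1: "\<forall>y\<in>S. (u has_derivative blinfun_apply (f' y)) (at y)"
    and D2: "\<forall>y\<in>S. (f' has_derivative blinfun_apply (f'' y)) (at y)"
    and nx: "norm x = 1" and vx: "v \<bullet> x = 0"
  shows "sph_grad u x v = blinfun_apply (f' x) v"
    and "sph_hess u x v = blinfun_apply (blinfun_apply (f'' x) v) v - (norm v)\<^sup>2 * blinfun_apply (f' x) x"
proof -
  note cd = curve_derivs[OF S D1 D2 nx vx]
  have eqf: "(\<lambda>t. u (sphere_exp x (t *\<^sub>R v))) = (\<lambda>t. u (gam x v t))" by (simp add: sphere_exp_gam)
  have dd: "deriv (\<lambda>t. u (gam x v t)) = (\<lambda>t. blinfun_apply (f' (gam x v t)) (gam1 x v t))"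
    using cd(1) by (auto intro!: DERIV_imp_deriv)
  show "sph_grad u x v = blinfun_apply (f' x) v"
    unfolding sph_grad_def eqf dd by (simp add: gam_0 gam1_0)
  show "sph_hess u x v = blinfun_apply (blinfun_apply (f'' x) v) v - (norm v)\<^sup>2 * blinfun_apply (f' x) x"
    unfolding sph_hess_def eqf dd by (rule DERIV_imp_deriv[OF cd(2)])
qed

lemma second_deriv_test:
  fixes d D :: "real \<Rightarrow> real"
  assumes der: "\<And>t. (d has_real_derivative D t) (at t)"
    and der2: "(D has_real_derivative c) (at 0)"
    and mx: "\<And>t. d t \<le> d 0"
  shows "D 0 = 0" and "c \<le> 0"
proof -
  show D0: "D 0 = 0" by (rule DERIV_local_max[OF der[of 0] zero_less_one]) (use mx in auto)
  show "c \<le> 0"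
  proof (rule ccontr)
    assume "\<not> c \<le> 0"
    then have "c > 0" by simp
    from DERIV_pos_inc_right[OF der2 this] obtain e where e: "e > 0" "\<And>h. h > 0 \<Longrightarrow> h < e \<Longrightarrow> D 0 < D (0 + h)"
      by blast
    define h where "h = e / 2"
    have h: "h > 0" "h < e" using e by (auto simp: h_def)
    obtain z where z: "0 < z" "z < h" "d h - d 0 = (h - 0) * D z"
      using MVT2[OF h(1) der] by blast
    have "D z > 0" using e(2)[of z] z h D0 by simp
    then have "d h - d 0 > 0" using z h by simp
    then show False using mx[of h] by simp
  qed
qed

definition Bform :: "('a::euclidean_space \<Rightarrow>\<^sub>L ('a \<Rightarrow>\<^sub>L real)) \<Rightarrow> real \<Rightarrow> 'a \<Rightarrow> 'a \<Rightarrow> real" where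
  "Bform L c v w = (blinfun_apply (blinfun_apply L v) w + blinfun_apply (blinfun_apply L w) v) / 2 - (v \<bullet> w) * c"

lemma Bform_symbil: "symbil (Bform L c)"
  unfolding symbil_def Bform_def
  by (simp add: blinfun.add_left blinfun.add_right blinfun.scaleR_left blinfun.scaleR_right
      inner_add_left inner_commute algebra_simps add_divide_distrib)

lemma Bform_cont: "continuous_on UNIV (\<lambda>v. Bform L c v v)"
  unfolding Bform_def
  by (intro continuous_intros blinfun.continuous_on continuous_on_id) auto

lemma Bform_diag: "Bform L c v v = blinfun_apply (blinfun_apply L v) v - (norm v)\<^sup>2 * c"
  by (simp add: Bform_def power2_norm_eq_inner)

lemma riesz_blinfun:
  fixes L :: "'a::euclidean_space \<Rightarrow>\<^sub>L real"
  shows "blinfun_apply L v = (\<Sum>b\<in>Basis. blinfun_apply L b *\<^sub>R b) \<bullet> v"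
proof -
  have "blinfun_apply L v = blinfun_apply L (\<Sum>b\<in>Basis. (v \<bullet> b) *\<^sub>R b)"
    by (simp add: euclidean_representation)
  also have "\<dots> = (\<Sum>b\<in>Basis. (v \<bullet> b) * blinfun_apply L b)"
    by (simp add: blinfun.sum_right blinfun.scaleR_right)
  also have "\<dots> = (\<Sum>b\<in>Basis. (blinfun_apply L b *\<^sub>R b) \<bullet> v)"
    by (rule sum.cong) (simp_all add: inner_commute)
  also have "\<dots> = (\<Sum>b\<in>Basis. blinfun_apply L b *\<^sub>R b) \<bullet> v"
    by (simp only: inner_sum_left)
  finally show ?thesis .
qed

lemma finite_Idx: "finite (Idx n P)"
proof -
  have "Idx n P \<subseteq> Pow {..<n}" by (auto simp: Idx_def)
  then show ?thesis by (rule finite_subset) simp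
qed

lemma eig_frame_of:
  fixes x :: "'a::euclidean_space"
  assumes tf: "tframe n x e" and sb: "symbil B"
    and dg: "\<forall>i<n. \<forall>k<n. i \<noteq> k \<longrightarrow> B (e i) (e k) = 0"
    and hess: "\<And>v. v \<bullet> x = 0 \<Longrightarrow> sph_hess u x v = B v v"
  shows "eig_frame n u x e (\<lambda>j. B (e j) (e j) + u x)"
  unfolding eig_frame_def
proof (intro conjI tf allI)
  fix c :: "nat \<Rightarrow> real"
  let ?V = "\<Sum>i<n. c i *\<^sub>R e i"
  have Vx: "?V \<bullet> x = 0" using tf by (simp add: tframe_def inner_sum_left)
  have "sph_hess u x ?V = (\<Sum>i<n. (c i)\<^sup>2 * B (e i) (e i))"
    unfolding hess[OF Vx] by (rule symbil_diag[OF sb]) (use dg in auto)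
  then show "sph_hess u x ?V + u x * (\<Sum>i<n. (c i)\<^sup>2) = (\<Sum>i<n. (B (e i) (e i) + u x) * (c i)\<^sup>2)"
    by (simp add: sum_distrib_left sum.distrib algebra_simps)
qed

lemma powr_alg:
  fixes M a G p q :: real and k l :: nat
  assumes M: "M > 0" and a: "a > 0" and G: "G \<ge> 0" and pq: "p = q - real l" and lk: "l < k"
  shows "(M * a) powr (p - 1) * ((M * a)\<^sup>2 + M\<^sup>2 * G) powr ((real k + 1 - q) / 2)
       = M ^ (k - l) * (a powr (p - 1) * (a\<^sup>2 + G) powr ((real k + 1 - q) / 2))"
proof -
  define s where "s = (real k + 1 - q) / 2"
  have X: "a\<^sup>2 + G > 0" using a G by (simp add: add_pos_nonneg)
  have e1: "(M * a) powr (p - 1) = M powr (p - 1) * a powr (p - 1)" using M a by (simp add: powr_mult)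
  have e2: "(M * a)\<^sup>2 + M\<^sup>2 * G = M\<^sup>2 * (a\<^sup>2 + G)" by (simp add: power_mult_distrib algebra_simps)
  have e3: "(M\<^sup>2 * (a\<^sup>2 + G)) powr s = (M\<^sup>2) powr s * (a\<^sup>2 + G) powr s" using M X by (simp add: powr_mult)
  have e4: "(M\<^sup>2) powr s = M powr (2 * s)"
  proof -
    have "M powr 2 = M\<^sup>2" using M by simp
    then have "M\<^sup>2 = M powr 2" by simp
    then show ?thesis by (simp add: powr_powr)
  qed
  have e5: "M powr (p - 1) * M powr (2 * s) = M powr (real (k - l))"
  proof -
    have "M powr (p - 1) * M powr (2 * s) = M powr (p - 1 + 2 * s)" by (simp add: powr_add)
    also have "p - 1 + 2 * s = real (k - l)" using pq lk by (simp add: s_def of_nat_diff field_simps)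
    finally show ?thesis by simp
  qed
  have e6: "M powr (real (k - l)) = M ^ (k - l)" using M by (simp add: powr_realpow)
  have "M powr (p - 1) * a powr (p - 1) * (M powr (2 * s) * (a\<^sup>2 + G) powr s)
      = (M powr (p - 1) * M powr (2 * s)) * (a powr (p - 1) * (a\<^sup>2 + G) powr s)"
    by (simp only: mult_ac)
  then show ?thesis
    unfolding s_def[symmetric] e1 e2 e3 e4 e5 e6 .
qed

lemma cont_of_deriv:
  assumes "sphere 0 1 \<subseteq> S" "\<forall>y\<in>S. (u has_derivative blinfun_apply (f' y)) (at y)"
  shows "continuous_on (sphere 0 1) u"
proof (rule continuous_at_imp_continuous_on, rule ballI)
  fix y :: 'a assume "y \<in> sphere 0 1"
  then have "(u has_derivative blinfun_apply (f' y)) (at y)" using assms by blast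
  then show "isCont u y" by (rule has_derivative_continuous)
qed

lemma one_side:
  fixes n P k l :: nat and p q \<gamma>1 \<gamma>2 :: real
    and \<phi> u1 u2 :: "'a::euclidean_space \<Rightarrow> real"
  assumes dim: "DIM('a) = n + 1" and lk: "l < k" and pq: "p = q - real l"
    and phi: "\<forall>x\<in>sphere 0 1. \<phi> x > 0"
    and ad1: "admissible n P k u1" and pos1: "\<forall>x\<in>sphere 0 1. u1 x > 0"
    and so1: "solves n P k l p q \<gamma>1 \<phi> u1"
    and ad2: "admissible n P k u2" and pos2: "\<forall>x\<in>sphere 0 1. u2 x > 0"
    and so2: "solves n P k l p q \<gamma>2 \<phi> u2"
  shows "\<gamma>1 \<le> \<gamma>2"
proof -
  obtain S1 f1 F1 where S1: "sphere 0 1 \<subseteq> S1"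
    and D11: "\<forall>y\<in>S1. (u1 has_derivative blinfun_apply (f1 y)) (at y)"
    and D12: "\<forall>y\<in>S1. (f1 has_derivative blinfun_apply (F1 y)) (at y)"
    using ad1 unfolding admissible_def C2_sphere_def C2_on_def by blast
  obtain S2 f2 F2 where S2: "sphere 0 1 \<subseteq> S2"
    and D21: "\<forall>y\<in>S2. (u2 has_derivative blinfun_apply (f2 y)) (at y)"
    and D22: "\<forall>y\<in>S2. (f2 has_derivative blinfun_apply (F2 y)) (at y)"
    using ad2 unfolding admissible_def C2_sphere_def C2_on_def by blast
  have c1: "continuous_on (sphere 0 1) u1" by (rule cont_of_deriv[OF S1 D11])
  have c2: "continuous_on (sphere 0 1) u2" by (rule cont_of_deriv[OF S2 D21])
  have cr: "continuous_on (sphere 0 1) (\<lambda>y. u1 y / u2 y)"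
    using c1 c2 pos2 by (intro continuous_on_divide) auto
  have ne: "sphere (0::'a) 1 \<noteq> {}" by simp
  obtain x0 where x0: "x0 \<in> sphere 0 1" "\<forall>y\<in>sphere 0 1. u1 y / u2 y \<le> u1 x0 / u2 x0"
    using continuous_attains_sup[OF compact_sphere ne cr] by blast
  define M where "M = u1 x0 / u2 x0"
  have a0: "u2 x0 > 0" using pos2 x0 by blast
  have Mpos: "M > 0" using pos1 x0 a0 by (simp add: M_def)
  have le: "\<And>y::'a. y \<in> sphere 0 1 \<Longrightarrow> u1 y \<le> M * u2 y"
  proof -
    fix y :: 'a assume y: "y \<in> sphere 0 1"
    have "u1 y / u2 y \<le> M" using x0 y by (simp add: M_def)
    then show "u1 y \<le> M * u2 y" using pos2 y by (simp add: divide_le_eq)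
  qed
  have eq0: "u1 x0 = M * u2 x0" using a0 by (simp add: M_def)
  have nx0: "norm x0 = 1" using x0 by simp
  have tang: "blinfun_apply (f1 x0) v = M * blinfun_apply (f2 x0) v \<and>
      blinfun_apply (blinfun_apply (F1 x0) v) v - (norm v)\<^sup>2 * blinfun_apply (f1 x0) x0
      \<le> M * (blinfun_apply (blinfun_apply (F2 x0) v) v - (norm v)\<^sup>2 * blinfun_apply (f2 x0) x0)"
    if vx: "v \<bullet> x0 = 0" for v
  proof -
    note cd1 = curve_derivs[OF S1 D11 D12 nx0 vx]
    note cd2 = curve_derivs[OF S2 D21 D22 nx0 vx]
    define d where "d = (\<lambda>t. u1 (gam x0 v t) - M * u2 (gam x0 v t))"
    define D where "D = (\<lambda>t. blinfun_apply (f1 (gam x0 v t)) (gam1 x0 v t) - M * blinfun_apply (f2 (gam x0 v t)) (gam1 x0 v t))"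
    have der: "(d has_real_derivative D t) (at t)" for t
      unfolding d_def D_def using cd1(1) cd2(1) by (intro DERIV_diff DERIV_cmult) auto
    have der2: "(D has_real_derivative
        ((blinfun_apply (blinfun_apply (F1 x0) v) v - (norm v)\<^sup>2 * blinfun_apply (f1 x0) x0)
        - M * (blinfun_apply (blinfun_apply (F2 x0) v) v - (norm v)\<^sup>2 * blinfun_apply (f2 x0) x0))) (at 0)"
      unfolding D_def using cd1(2) cd2(2) by (intro DERIV_diff DERIV_cmult) auto
    have mx: "d t \<le> d 0" for t
    proof -
      have "gam x0 v t \<in> sphere 0 1" using gam_norm[OF nx0 vx] by simp
      then have "d t \<le> 0" using le by (simp add: d_def)
      moreover have "d 0 = 0" using eq0 by (simp add: d_def gam_0)
      ultimately show ?thesis by simp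
    qed
    note sdt = second_deriv_test[OF der der2 mx]
    from sdt(1) have "blinfun_apply (f1 x0) v = M * blinfun_apply (f2 x0) v"
      by (simp add: D_def gam_0 gam1_0)
    then show ?thesis using sdt(2) by simp
  qed
  define B1 where "B1 = Bform (F1 x0) (blinfun_apply (f1 x0) x0)"
  define B2 where "B2 = Bform (F2 x0) (blinfun_apply (f2 x0) x0)"
  have sb1: "symbil B1" and sb2: "symbil B2" by (simp_all add: B1_def B2_def Bform_symbil)
  have cB1: "continuous_on UNIV (\<lambda>v. B1 v v)" unfolding B1_def by (rule Bform_cont)
  have cB2: "continuous_on UNIV (\<lambda>v. B2 v v)" unfolding B2_def by (rule Bform_cont)
  have hess1: "sph_hess u1 x0 v = B1 v v" if "v \<bullet> x0 = 0" for v
    using sph_grad_hess(2)[OF S1 D11 D12 nx0 that] by (simp add: B1_def Bform_diag)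
  have hess2: "sph_hess u2 x0 v = B2 v v" if "v \<bullet> x0 = 0" for v
    using sph_grad_hess(2)[OF S2 D21 D22 nx0 that] by (simp add: B2_def Bform_diag)
  have grad1: "sph_grad u1 x0 v = blinfun_apply (f1 x0) v" if "v \<bullet> x0 = 0" for v
    using sph_grad_hess(1)[OF S1 D11 D12 nx0 that] .
  have grad2: "sph_grad u2 x0 v = blinfun_apply (f2 x0) v" if "v \<bullet> x0 = 0" for v
    using sph_grad_hess(1)[OF S2 D21 D22 nx0 that] .
  have cmp: "\<forall>v. v \<bullet> x0 = 0 \<longrightarrow> B1 v v \<le> M * B2 v v"
    using tang by (simp add: B1_def B2_def Bform_diag)
  obtain e1 where tf1: "tframe n x0 e1" and dg1: "\<forall>i<n. \<forall>k<n. i \<noteq> k \<longrightarrow> B1 (e1 i) (e1 k) = 0"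
    and dec1: "\<forall>i k. i \<le> k \<longrightarrow> k < n \<longrightarrow> B1 (e1 k) (e1 k) \<le> B1 (e1 i) (e1 i)"
    using spec_frame[OF dim nx0 sb1 cB1] by blast
  obtain e2 where tf2: "tframe n x0 e2" and dg2: "\<forall>i<n. \<forall>k<n. i \<noteq> k \<longrightarrow> B2 (e2 i) (e2 k) = 0"
    and mx2: "\<forall>k<n. \<forall>v. norm v = 1 \<longrightarrow> v \<bullet> x0 = 0 \<longrightarrow> (\<forall>i<k. v \<bullet> e2 i = 0) \<longrightarrow> B2 v v \<le> B2 (e2 k) (e2 k)"
    using spec_frame[OF dim nx0 sb2 cB2] by blast
  define lam1 where "lam1 = (\<lambda>j. B1 (e1 j) (e1 j) + u1 x0)"
  define lam2 where "lam2 = (\<lambda>j. B2 (e2 j) (e2 j) + u2 x0)"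
  have ef1: "eig_frame n u1 x0 e1 lam1" unfolding lam1_def by (rule eig_frame_of[OF tf1 sb1 dg1 hess1])
  have ef2: "eig_frame n u2 x0 e2 lam2" unfolding lam2_def by (rule eig_frame_of[OF tf2 sb2 dg2 hess2])
  have G1: "in_Gamma k (Idx n P) (Lam lam1)" using ad1 x0 ef1 by (auto simp: admissible_def)
  have G2: "in_Gamma k (Idx n P) (Lam lam2)" using ad2 x0 ef2 by (auto simp: admissible_def)
  define s where "s = (real k + 1 - q) / 2"
  have eq1: "esym k (Idx n P) (Lam lam1) / esym l (Idx n P) (Lam lam1)
      = u1 x0 powr (p - 1) * ((u1 x0)\<^sup>2 + (\<Sum>i<n. (sph_grad u1 x0 (e1 i))\<^sup>2)) powr s * \<gamma>1 * \<phi> x0"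
    using so1 x0 ef1 unfolding solves_def s_def by blast
  have eq2: "esym k (Idx n P) (Lam lam2) / esym l (Idx n P) (Lam lam2)
      = u2 x0 powr (p - 1) * ((u2 x0)\<^sup>2 + (\<Sum>i<n. (sph_grad u2 x0 (e2 i))\<^sup>2)) powr s * \<gamma>2 * \<phi> x0"
    using so2 x0 ef2 unfolding solves_def s_def by blast
  have lamle: "lam1 j \<le> M * lam2 j" if j: "j < n" for j
  proof -
    have "B1 (e1 j) (e1 j) \<le> M * B2 (e2 j) (e2 j)"
      by (rule weyl[OF dim nx0 sb1 sb2 tf1 dg1 dec1 tf2 mx2 cmp less_imp_le[OF Mpos] j])
    then show ?thesis using eq0 by (simp add: lam1_def lam2_def algebra_simps)
  qed
  have Lamle: "\<forall>I\<in>Idx n P. Lam lam1 I \<le> M * Lam lam2 I"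
  proof
    fix I assume "I \<in> Idx n P"
    then have I: "I \<subseteq> {..<n}" by (simp add: Idx_def)
    have "Lam lam1 I \<le> (\<Sum>i\<in>I. M * lam2 i)" unfolding Lam_def
      by (rule sum_mono) (use I lamle in auto)
    then show "Lam lam1 I \<le> M * Lam lam2 I" by (simp add: Lam_def sum_distrib_left)
  qed
  have gm: "esym k (Idx n P) (Lam lam1) / esym l (Idx n P) (Lam lam1)
      \<le> esym k (Idx n P) (\<lambda>I. M * Lam lam2 I) / esym l (Idx n P) (\<lambda>I. M * Lam lam2 I)"
    using gamma_mono[OF finite_Idx G1 Lamle lk] by blast
  have lpos: "esym l (Idx n P) (Lam lam2) > 0" using in_Gamma_pos0[OF finite_Idx G2, of l] lk by simp
  have rat: "esym k (Idx n P) (\<lambda>I. M * Lam lam2 I) / esym l (Idx n P) (\<lambda>I. M * Lam lam2 I)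
      = M ^ (k - l) * (esym k (Idx n P) (Lam lam2) / esym l (Idx n P) (Lam lam2))"
  proof -
    have "M ^ k = M ^ (k - l) * M ^ l" using lk by (simp add: power_add[symmetric])
    then show ?thesis using Mpos by (simp add: esym_scale[OF finite_Idx])
  qed
  define w2 where "w2 = (\<Sum>b\<in>Basis. blinfun_apply (f2 x0) b *\<^sub>R b)"
  define G where "G = (norm w2)\<^sup>2 - (w2 \<bullet> x0)\<^sup>2"
  have rz: "\<And>v. blinfun_apply (f2 x0) v = w2 \<bullet> v" unfolding w2_def by (rule riesz_blinfun)
  have gr2: "(\<Sum>i<n. (sph_grad u2 x0 (e2 i))\<^sup>2) = G"
  proof -
    have "(\<Sum>i<n. (sph_grad u2 x0 (e2 i))\<^sup>2) = (\<Sum>i<n. (w2 \<bullet> e2 i)\<^sup>2)"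
    proof (rule sum.cong[OF refl])
      fix i assume "i \<in> {..<n}"
      then have "e2 i \<bullet> x0 = 0" using tf2 by (simp add: tframe_def)
      then show "(sph_grad u2 x0 (e2 i))\<^sup>2 = (w2 \<bullet> e2 i)\<^sup>2" by (simp add: grad2 rz)
    qed
    also have "\<dots> = G" unfolding G_def by (rule parseval[OF dim nx0 tf2])
    finally show ?thesis .
  qed
  have gr1: "(\<Sum>i<n. (sph_grad u1 x0 (e1 i))\<^sup>2) = M\<^sup>2 * G"
  proof -
    have "(\<Sum>i<n. (sph_grad u1 x0 (e1 i))\<^sup>2) = (\<Sum>i<n. M\<^sup>2 * (w2 \<bullet> e1 i)\<^sup>2)"
    proof (rule sum.cong[OF refl])
      fix i assume "i \<in> {..<n}"
      then have o: "e1 i \<bullet> x0 = 0" using tf1 by (simp add: tframe_def)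
      have "sph_grad u1 x0 (e1 i) = M * (w2 \<bullet> e1 i)" using grad1[OF o] conjunct1[OF tang[OF o]] rz by simp
      then show "(sph_grad u1 x0 (e1 i))\<^sup>2 = M\<^sup>2 * (w2 \<bullet> e1 i)\<^sup>2" by (simp add: power_mult_distrib)
    qed
    also have "\<dots> = M\<^sup>2 * (\<Sum>i<n. (w2 \<bullet> e1 i)\<^sup>2)" by (simp add: sum_distrib_left)
    also have "(\<Sum>i<n. (w2 \<bullet> e1 i)\<^sup>2) = G" unfolding G_def by (rule parseval[OF dim nx0 tf1])
    finally show ?thesis .
  qed
  have Gnn: "G \<ge> 0" using gr2[symmetric] by (simp add: sum_nonneg)
  define R where "R = u2 x0 powr (p - 1) * ((u2 x0)\<^sup>2 + G) powr s"
  have X: "(u2 x0)\<^sup>2 + G > 0" using a0 Gnn by (simp add: add_pos_nonneg)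
  have Rpos: "R > 0" unfolding R_def using a0 X by (intro mult_pos_pos) simp_all
  have phi0: "\<phi> x0 > 0" using phi x0 by blast
  have r1: "esym k (Idx n P) (Lam lam1) / esym l (Idx n P) (Lam lam1) = M ^ (k - l) * R * \<gamma>1 * \<phi> x0"
  proof -
    have "u1 x0 powr (p - 1) * ((u1 x0)\<^sup>2 + M\<^sup>2 * G) powr s = M ^ (k - l) * R"
      unfolding eq0 R_def s_def by (rule powr_alg[OF Mpos a0 Gnn pq lk])
    then show ?thesis using eq1 gr1 by simp
  qed
  have r2: "esym k (Idx n P) (Lam lam2) / esym l (Idx n P) (Lam lam2) = R * \<gamma>2 * \<phi> x0"
    using eq2 gr2 by (simp add: R_def)
  have "M ^ (k - l) * R * \<phi> x0 * \<gamma>1 \<le> M ^ (k - l) * R * \<phi> x0 * \<gamma>2"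
    using gm rat r1 r2 by (simp add: algebra_simps)
  moreover have "M ^ (k - l) * R * \<phi> x0 > 0" using Mpos Rpos phi0 by simp
  ultimately show ?thesis by (simp add: mult_le_cancel_left_pos)
qed

theorem lemma5p5:
  fixes n P k l :: nat and p q \<gamma>1 \<gamma>2 :: real
    and \<phi> u1 u2 :: "'a::euclidean_space \<Rightarrow> real"
  assumes "n \<ge> 2" and "DIM('a) = n + 1"
    and "1 < P" and "P \<le> n - 1"
    and "l < k" and "k \<le> n choose P"
    and "p = q - real l"
    and "continuous_on (sphere 0 1) \<phi>" and "\<forall>x\<in>sphere 0 1. \<phi> x > 0"
    and "admissible n P k u1" and "\<forall>x\<in>sphere 0 1. u1 x > 0"
    and "solves n P k l p q \<gamma>1 \<phi> u1"
    and "admissible n P k u2" and "\<forall>x\<in>sphere 0 1. u2 x > 0"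
    and "solves n P k l p q \<gamma>2 \<phi> u2"
  shows "\<gamma>1 = \<gamma>2"
proof -
  have a: "\<gamma>1 \<le> \<gamma>2"
    by (rule one_side[OF assms(2) assms(5) assms(7) assms(9) assms(10) assms(11) assms(12)
          assms(13) assms(14) assms(15)])
  have b: "\<gamma>2 \<le> \<gamma>1"
    by (rule one_side[OF assms(2) assms(5) assms(7) assms(9) assms(13) assms(14) assms(15)
          assms(10) assms(11) assms(12)])
  show ?thesis using a b by simp
qed

end
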